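(* Let $m\ge2$ and let $a_1,a_2,b_1,b_2,b_3,c_1,\dots,c_{2m+1}\in\mathbb{C}$ with $a_1\ne a_2$, $b_1,b_2,b_3$ pairwise distinct, $c_1,\dots,c_{2m+1}$ pairwise distinct, and $(m+1)a_1+ma_2=b_1+mb_2+mb_3+\sum_{i=1}^{2m+1}c_i$. Let ${\bf B},{\bf C}$ be the $(2m+1)\times(2m+1)$ matrices of the odd family defined in the context. Then ${\bf A}={\bf B}+{\bf C}$ is diagonalizable, with eigenvalue $a_1$ of multiplicity $m+1$ and $a_2$ of multiplicity $m$.
   Context: Notation: $p_i^{jk}=c_i+b_j-a_k$, $q_{ij}=c_i+c_j+b_2+b_3-a_1-a_2$; empty products are $1$. ${\bf B}$ has $B_{11}=b_1$, $B_{1+i,1+i}=b_2$ and $B_{m+1+i,m+1+i}=b_3$ ($1\le i\le m$), $B_{1,1+j}=(-1)^{m-j}p^{21}_{2m+1-j}\frac{\prod_{k=j+1}^m q_{k,2m+1-j}}{\prod_{k=m+1}^{2m-j}(c_k-c_{2m+1-j})}$ ($1\le j\le m$), $B_{1,m+1+j}=(-1)^{m-j}p^{31}_{m+1-j}\frac{\prod_{k=m+1+j}^{2m}q_{m+1-j,k}}{\prod_{k=1}^{m-j}(c_k-c_{m+1-j})}$ ($1\le j\le m$), $B_{1+i,m+1+j}=(-1)^{m-j}p^{31}_{m+1-j}\frac{\prod_{k=1,k\ne m+1-j}^{i}q_{k,2m+1-i}\prod_{k=m+1+j,k\ne2m+1-i}^{2m}q_{m+1-j,k}}{\prod_{k=2m+2-i}^{2m}(c_{2m+1-i}-c_k)\prod_{k=1}^{m-j}(c_k-c_{m+1-j})}$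 ($1\le i,j\le m$), all other entries $0$. ${\bf C}$ has $C_{11}=c_{2m+1}$, $C_{1+i,1+i}=c_{2m+1-i}$, $C_{m+1+i,m+1+i}=c_{m+1-i}$ ($1\le i\le m$), $C_{1+i,1}=-\frac{\prod_{k=1}^i q_{k,2m+1-i}}{\prod_{k=2m+2-i}^{2m}(c_{2m+1-i}-c_k)}$ ($1\le i\le m$), $C_{m+1+i,1}=-\frac{\prod_{k=m+1}^{m+i}q_{m+1-i,k}}{\prod_{k=m+2-i}^m(c_{m+1-i}-c_k)}$ ($1\le i\le m$), $C_{m+1+i,1+j}=(-1)^{m-j}p^{21}_{2m+1-j}\frac{\prod_{k=m+1,k\ne2m+1-j}^{m+i}q_{m+1-i,k}\prod_{k=j+1,k\ne m+1-i}^m q_{k,2m+1-j}}{\prod_{k=m+2-i}^m(c_{m+1-i}-c_k)\prod_{k=m+1}^{2m-j}(c_k-c_{2m+1-j})}$ ($1\le i,j\le m$), all other entries $0$. *)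

theory Defs
  imports Complex_Main "HOL-Computational_Algebra.Polynomial" "Jordan_Normal_Form.Char_Poly"
begin

definition diagonalizable :: "'a :: semiring_1 mat \<Rightarrow> bool" where
  "diagonalizable A \<longleftrightarrow> (\<exists>D. diagonal_mat D \<and> similar_mat A D)"

text \<open>Notation of the paper. The families a, b, c are indexed from 1.\<close>
definition pp :: "(nat \<Rightarrow> complex) \<Rightarrow> (nat \<Rightarrow> complex) \<Rightarrow> (nat \<Rightarrow> complex) \<Rightarrow> nat \<Rightarrow> nat \<Rightarrow> nat \<Rightarrow> complex" where
  "pp a b c i j k = c i + b j - a k"

definition qq :: "(nat \<Rightarrow> complex) \<Rightarrow> (nat \<Rightarrow> complex) \<Rightarrow> (nat \<Rightarrow> complex) \<Rightarrow> nat \<Rightarrow> nat \<Rightarrow> complex" where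
  "qq a b c i j = c i + c j + b 2 + b 3 - a 1 - a 2"

definition Bent :: "nat \<Rightarrow> (nat \<Rightarrow> complex) \<Rightarrow> (nat \<Rightarrow> complex) \<Rightarrow> (nat \<Rightarrow> complex) \<Rightarrow> nat \<Rightarrow> nat \<Rightarrow> complex" where
  "Bent m a b c r s =
    (if r = 1 \<and> s = 1 then b 1
     else if 2 \<le> r \<and> r \<le> m + 1 \<and> s = r then b 2
     else if m + 2 \<le> r \<and> r \<le> 2*m + 1 \<and> s = r then b 3
     else if r = 1 \<and> 2 \<le> s \<and> s \<le> m + 1 then
       (let j = s - 1 in
         (-1) ^ (m - j) * pp a b c (2*m + 1 - j) 2 1
         * (\<Prod>k\<in>{j+1..m}. qq a b c k (2*m + 1 - j))
         / (\<Prod>k\<in>{m+1..2*m - j}. (c k - c (2*m + 1 - j))))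
     else if r = 1 \<and> m + 2 \<le> s \<and> s \<le> 2*m + 1 then
       (let j = s - (m + 1) in
         (-1) ^ (m - j) * pp a b c (m + 1 - j) 3 1
         * (\<Prod>k\<in>{m+1+j..2*m}. qq a b c (m + 1 - j) k)
         / (\<Prod>k\<in>{1..m - j}. (c k - c (m + 1 - j))))
     else if 2 \<le> r \<and> r \<le> m + 1 \<and> m + 2 \<le> s \<and> s \<le> 2*m + 1 then
       (let i = r - 1; j = s - (m + 1) in
         (-1) ^ (m - j) * pp a b c (m + 1 - j) 3 1
         * ((\<Prod>k\<in>{1..i} - {m + 1 - j}. qq a b c k (2*m + 1 - i))
            * (\<Prod>k\<in>{m+1+j..2*m} - {2*m + 1 - i}. qq a b c (m + 1 - j) k))
         / ((\<Prod>k\<in>{2*m+2-i..2*m}. (c (2*m + 1 - i) - c k))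
            * (\<Prod>k\<in>{1..m - j}. (c k - c (m + 1 - j)))))
     else 0)"

definition Cent :: "nat \<Rightarrow> (nat \<Rightarrow> complex) \<Rightarrow> (nat \<Rightarrow> complex) \<Rightarrow> (nat \<Rightarrow> complex) \<Rightarrow> nat \<Rightarrow> nat \<Rightarrow> complex" where
  "Cent m a b c r s =
    (if r = 1 \<and> s = 1 then c (2*m + 1)
     else if 2 \<le> r \<and> r \<le> m + 1 \<and> s = r then c (2*m + 1 - (r - 1))
     else if m + 2 \<le> r \<and> r \<le> 2*m + 1 \<and> s = r then c (m + 1 - (r - (m + 1)))
     else if 2 \<le> r \<and> r \<le> m + 1 \<and> s = 1 then
       (let i = r - 1 in
         - (\<Prod>k\<in>{1..i}. qq a b c k (2*m + 1 - i))
           / (\<Prod>k\<in>{2*m+2-i..2*m}. (c (2*m + 1 - i) - c k)))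
     else if m + 2 \<le> r \<and> r \<le> 2*m + 1 \<and> s = 1 then
       (let i = r - (m + 1) in
         - (\<Prod>k\<in>{m+1..m+i}. qq a b c (m + 1 - i) k)
           / (\<Prod>k\<in>{m+2-i..m}. (c (m + 1 - i) - c k)))
     else if m + 2 \<le> r \<and> r \<le> 2*m + 1 \<and> 2 \<le> s \<and> s \<le> m + 1 then
       (let i = r - (m + 1); j = s - 1 in
         (-1) ^ (m - j) * pp a b c (2*m + 1 - j) 2 1
         * ((\<Prod>k\<in>{m+1..m+i} - {2*m + 1 - j}. qq a b c (m + 1 - i) k)
            * (\<Prod>k\<in>{j+1..m} - {m + 1 - i}. qq a b c k (2*m + 1 - j)))
         / ((\<Prod>k\<in>{m+2-i..m}. (c (m + 1 - i) - c k))
            * (\<Prod>k\<in>{m+1..2*m - j}. (c k - c (2*m + 1 - j)))))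
     else 0)"

text \<open>The (2m+1) x (2m+1) matrices; JNF matrices are 0-indexed, so entry (i,j)
  of the Isabelle matrix is the paper's entry (i+1,j+1).\<close>
definition Bmat :: "nat \<Rightarrow> (nat \<Rightarrow> complex) \<Rightarrow> (nat \<Rightarrow> complex) \<Rightarrow> (nat \<Rightarrow> complex) \<Rightarrow> complex mat" where
  "Bmat m a b c = mat (2*m + 1) (2*m + 1) (\<lambda>(i, j). Bent m a b c (i + 1) (j + 1))"

definition Cmat :: "nat \<Rightarrow> (nat \<Rightarrow> complex) \<Rightarrow> (nat \<Rightarrow> complex) \<Rightarrow> (nat \<Rightarrow> complex) \<Rightarrow> complex mat" where
  "Cmat m a b c = mat (2*m + 1) (2*m + 1) (\<lambda>(i, j). Cent m a b c (i + 1) (j + 1))"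

end

theory Submission
  imports Defs "Jordan_Normal_Form.Jordan_Normal_Form_Existence"
begin


lemma linprod_coeffs:
  fixes u :: "nat \<Rightarrow> 'a::field"
  assumes "finite L"
  shows "degree (\<Prod>l\<in>L. [:u l, 1:]) = card L
    \<and> coeff (\<Prod>l\<in>L. [:u l, 1:]) (card L) = 1
    \<and> (card L \<ge> 1 \<longrightarrow> coeff (\<Prod>l\<in>L. [:u l, 1:]) (card L - 1) = (\<Sum>l\<in>L. u l))
    \<and> (card L \<ge> 2 \<longrightarrow> 2 * coeff (\<Prod>l\<in>L. [:u l, 1:]) (card L - 2)
          = (\<Sum>l\<in>L. u l)^2 - (\<Sum>l\<in>L. (u l)^2))"
  using assms
proof (induction L rule: finite_induct)
  case empty
  then show ?case by simp
next
  case (insert a L)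
  let ?p = "\<Prod>l\<in>L. [:u l, 1:]"
  have eq: "(\<Prod>l\<in>insert a L. [:u l, 1:]) = Polynomial.smult (u a) ?p + pCons 0 ?p"
    using insert by (simp add: mult_pCons_left)
  have nz: "?p \<noteq> 0" using insert.IH by (metis coeff_0 zero_neq_one)
  have cd: "card (insert a L) = Suc (card L)" using insert by simp
  have c1: "coeff (\<Prod>l\<in>insert a L. [:u l, 1:]) k = u a * coeff ?p k + (if k = 0 then 0 else coeff ?p (k - 1))" for k
    unfolding eq by (cases k) auto
  have deg: "degree (\<Prod>l\<in>insert a L. [:u l, 1:]) = Suc (card L)"
  proof -
    have "degree (\<Prod>l\<in>insert a L. [:u l, 1:]) = (\<Sum>l\<in>insert a L. degree [:u l, 1:])"
      by (rule degree_prod_sum_eq) auto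
    also have "\<dots> = card (insert a L)" by simp
    finally show ?thesis using cd by simp
  qed
  have top: "coeff ?p (Suc (card L)) = 0" using insert.IH by (simp add: coeff_eq_0)
  show ?case
  proof (intro conjI impI)
    show "degree (\<Prod>l\<in>insert a L. [:u l, 1:]) = card (insert a L)" using deg cd by simp
    show "coeff (\<Prod>l\<in>insert a L. [:u l, 1:]) (card (insert a L)) = 1"
      unfolding cd c1 using insert.IH top by simp
    show "coeff (\<Prod>l\<in>insert a L. [:u l, 1:]) (card (insert a L) - 1) = (\<Sum>l\<in>insert a L. u l)"
    proof (cases "card L = 0")
      case True
      then have "L = {}" using insert by simp
      then show ?thesis unfolding cd c1 by simp
    next
      case False
      then have "card L \<ge> 1" by simp
      then show ?thesis unfolding cd c1 using insert.IH insert.hyps by simp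
    qed
    assume "2 \<le> card (insert a L)"
    then have cL: "card L \<ge> 1" using cd by simp
    show "2 * coeff (\<Prod>l\<in>insert a L. [:u l, 1:]) (card (insert a L) - 2)
          = (\<Sum>l\<in>insert a L. u l)^2 - (\<Sum>l\<in>insert a L. (u l)^2)"
    proof (cases "card L = 1")
      case True
      then obtain b where "L = {b}" by (auto simp: card_Suc_eq)
      then show ?thesis using insert by (simp add: power2_eq_square algebra_simps)
    next
      case False
      then have "card L \<ge> 2" using cL by simp
      then have "card (insert a L) - 2 = Suc (card L - 2)" "card L - 2 = card L - 1 - 1" using cd by auto
      then show ?thesis
        unfolding c1 using insert.IH insert.hyps \<open>card L \<ge> 2\<close>
        by (simp add: power2_eq_square algebra_simps)
    qed
  qed
qed

lemma linprod_deg: fixes u :: "nat \<Rightarrow> 'a::field" shows "finite L \<Longrightarrow> degree (\<Prod>l\<in>L. [:u l, 1:]) = card L"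
  by (rule conjunct1[OF linprod_coeffs])
lemma linprod_top: fixes u :: "nat \<Rightarrow> 'a::field" shows "finite L \<Longrightarrow> coeff (\<Prod>l\<in>L. [:u l, 1:]) (card L) = 1"
  by (rule conjunct1[OF conjunct2[OF linprod_coeffs]])
lemma linprod_c1: fixes u :: "nat \<Rightarrow> 'a::field" shows "finite L \<Longrightarrow> card L \<ge> 1 \<Longrightarrow> coeff (\<Prod>l\<in>L. [:u l, 1:]) (card L - 1) = (\<Sum>l\<in>L. u l)"
  by (rule mp[OF conjunct1[OF conjunct2[OF conjunct2[OF linprod_coeffs]]]])
lemma linprod_c2: fixes u :: "nat \<Rightarrow> 'a::field" shows "finite L \<Longrightarrow> card L \<ge> 2 \<Longrightarrow> 2 * coeff (\<Prod>l\<in>L. [:u l, 1:]) (card L - 2)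
          = (\<Sum>l\<in>L. u l)^2 - (\<Sum>l\<in>L. (u l)^2)"
  by (rule mp[OF conjunct2[OF conjunct2[OF conjunct2[OF linprod_coeffs]]]])

definition wp :: "(nat \<Rightarrow> 'a::field) \<Rightarrow> nat \<Rightarrow> nat \<Rightarrow> 'a" where
  "wp x m j = (\<Prod>l\<in>{1..m}-{j}. (x j - x l))"
definition bp :: "(nat \<Rightarrow> 'a::field) \<Rightarrow> nat \<Rightarrow> nat \<Rightarrow> 'a poly" where
  "bp x m j = (\<Prod>l\<in>{1..m}-{j}. [:- x l, 1:])"
definition om :: "(nat \<Rightarrow> 'a::field) \<Rightarrow> nat \<Rightarrow> 'a poly" where
  "om x m = (\<Prod>l\<in>{1..m}. [:- x l, 1:])"

lemma wp_nz: assumes "inj_on x {1..m}" "j \<in> {1..m}" shows "wp x m j \<noteq> 0"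
proof -
  have "x j - x l \<noteq> 0" if "l \<in> {1..m}-{j}" for l
    using assms that inj_on_eq_iff[OF assms(1)] by fastforce
  then show ?thesis unfolding wp_def by (subst prod_zero_iff) auto
qed

lemma bp_props: assumes "j \<in> {1..m}"
  shows "degree (bp x m j) = m - 1" "coeff (bp x m j) (m - 1) = 1"
proof -
  have c: "card ({1..m}-{j}) = m - 1" using assms by simp
  have "degree (bp x m j) = card ({1..m}-{j})" unfolding bp_def by (rule linprod_deg) simp
  then show "degree (bp x m j) = m - 1" using c by simp
  have "coeff (bp x m j) (card ({1..m}-{j})) = 1" unfolding bp_def by (rule linprod_top) simp
  then show "coeff (bp x m j) (m - 1) = 1" using c by simp
qed

lemma om_props:
  fixes x :: "nat \<Rightarrow> 'a::field"
  shows "degree (om x m) = m" "coeff (om x m) m = 1"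
    "m \<ge> 1 \<Longrightarrow> coeff (om x m) (m - 1) = - (\<Sum>l=1..m. x l)"
    "m \<ge> 2 \<Longrightarrow> 2 * coeff (om x m) (m - 2) = (\<Sum>l=1..m. x l)^2 - (\<Sum>l=1..m. (x l)^2)"
proof -
  have c: "card {1..m} = m" by simp
  have "degree (om x m) = card {1..m}" unfolding om_def by (rule linprod_deg) simp
  then show "degree (om x m) = m" by simp
  have "coeff (om x m) (card {1..m}) = 1" unfolding om_def by (rule linprod_top) simp
  then show "coeff (om x m) m = 1" by simp
  have c: "card {1..m} = m" by simp
  assume m1: "m \<ge> 1"
  have "coeff (om x m) (card {1..m} - 1) = (\<Sum>l\<in>{1..m}. - x l)" unfolding om_def
    by (rule linprod_c1) (use m1 in simp_all)
  then show "coeff (om x m) (m - 1) = - (\<Sum>l=1..m. x l)" by (simp only: c sum_negf)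
next
  have c: "card {1..m} = m" by simp
  assume m2: "m \<ge> 2"
  have "2 * coeff (om x m) (card {1..m} - 2) = (\<Sum>l\<in>{1..m}. - x l)^2 - (\<Sum>l\<in>{1..m}. (- x l)^2)" unfolding om_def
    by (rule linprod_c2) (use m2 in simp_all)
  then show "2 * coeff (om x m) (m - 2) = (\<Sum>l=1..m. x l)^2 - (\<Sum>l=1..m. (x l)^2)"
    by (simp only: c sum_negf power2_minus)
qed

lemma poly_bp: "poly (bp x m j) t = (\<Prod>l\<in>{1..m}-{j}. (t - x l))"
  unfolding bp_def by (simp add: poly_prod)
lemma poly_om: "poly (om x m) t = (\<Prod>l\<in>{1..m}. (t - x l))"
  unfolding om_def by (simp add: poly_prod)


lemma lag_poly:
  fixes x :: "nat \<Rightarrow> 'a::field"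
  assumes inj: "inj_on x {1..m}" and m: "m \<ge> 1" and dF: "degree F \<le> m"
  shows "(\<Sum>j=1..m. Polynomial.smult (poly F (x j) / wp x m j) (bp x m j))
         = F - Polynomial.smult (coeff F m) (om x m)"
proof (rule poly_eqI_degree[of "x ` {1..m}"])
  have card: "card (x ` {1..m}) = m" using inj by (simp add: card_image)
  show "card (x ` {1..m}) > degree (\<Sum>j=1..m. Polynomial.smult (poly F (x j) / wp x m j) (bp x m j))"
    unfolding card
  proof (rule le_less_trans[OF degree_sum_le[of _ _ "m - 1"]])
    show "m - 1 < m" using m by simp
    fix j assume "j \<in> {1..m}"
    then show "degree (Polynomial.smult (poly F (x j) / wp x m j) (bp x m j)) \<le> m - 1"
      using bp_props(1)[of j m x] by (simp add: degree_smult_le)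
  qed simp
  let ?R = "F - Polynomial.smult (coeff F m) (om x m)"
  have dR: "degree ?R \<le> m"
  proof -
    have "degree (Polynomial.smult (coeff F m) (om x m)) \<le> m"
      by (rule order_trans[OF degree_smult_le]) (simp add: om_props(1))
    then show ?thesis using dF degree_diff_le by blast
  qed
  have cR: "coeff ?R m = 0" using om_props(2)[of x m] by simp
  show "card (x ` {1..m}) > degree ?R" unfolding card
  proof (rule ccontr)
    assume "\<not> degree ?R < m"
    then have "degree ?R = m" using dR by simp
    then have "lead_coeff ?R = 0" using cR by simp
    then have "?R = 0" using leading_coeff_0_iff by blast
    then show False using \<open>degree ?R = m\<close> m by simp
  qed
  fix t assume "t \<in> x ` {1..m}"
  then obtain k where k: "k \<in> {1..m}" "t = x k" by auto
  have "poly (\<Sum>j=1..m. Polynomial.smult (poly F (x j) / wp x m j) (bp x m j)) t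
      = (\<Sum>j=1..m. poly F (x j) / wp x m j * poly (bp x m j) t)"
    by (simp add: poly_sum)
  also have "\<dots> = (\<Sum>j\<in>{k}. poly F (x j) / wp x m j * poly (bp x m j) t)"
  proof (rule sum.mono_neutral_right)
    show "\<forall>j\<in>{1..m} - {k}. poly F (x j) / wp x m j * poly (bp x m j) t = 0"
    proof
      fix j assume j: "j \<in> {1..m} - {k}"
      have "poly (bp x m j) t = 0" unfolding poly_bp k(2)
        apply (rule prod_zero) using j k by auto
      then show "poly F (x j) / wp x m j * poly (bp x m j) t = 0" by simp
    qed
  qed (use k in auto)
  also have "\<dots> = poly F (x k)"
    using wp_nz[OF inj k(1)] unfolding poly_bp wp_def k(2) by simp
  also have "\<dots> = poly ?R t"
  proof -
    have "poly (om x m) t = 0" unfolding poly_om k(2) apply (rule prod_zero) using k by auto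
    then show ?thesis using k by simp
  qed
  finally show "poly (\<Sum>j=1..m. Polynomial.smult (poly F (x j) / wp x m j) (bp x m j)) t = poly ?R t" .
qed

lemma lag_eval:
  fixes x :: "nat \<Rightarrow> 'a::field"
  assumes inj: "inj_on x {1..m}" and m: "m \<ge> 1" and dF: "degree F \<le> m"
  shows "(\<Sum>j=1..m. poly F (x j) / wp x m j * (\<Prod>l\<in>{1..m}-{j}. (t - x l)))
         = poly F t - coeff F m * (\<Prod>l\<in>{1..m}. (t - x l))"
  using arg_cong[OF lag_poly[OF assms], of "\<lambda>p. poly p t"]
  by (simp add: poly_sum poly_bp poly_om)

lemma lag_sum:
  fixes x :: "nat \<Rightarrow> 'a::field"
  assumes inj: "inj_on x {1..m}" and m: "m \<ge> 1" and dF: "degree F \<le> m"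
  shows "(\<Sum>j=1..m. poly F (x j) / wp x m j)
         = coeff F (m - 1) + coeff F m * (\<Sum>l=1..m. x l)"
proof -
  have "(\<Sum>j=1..m. poly F (x j) / wp x m j)
     = coeff (\<Sum>j=1..m. Polynomial.smult (poly F (x j) / wp x m j) (bp x m j)) (m - 1)"
    unfolding coeff_sum coeff_smult
  proof (intro sum.cong refl)
    fix j assume "j \<in> {1..m}"
    then show "poly F (x j) / wp x m j = poly F (x j) / wp x m j * coeff (bp x m j) (m - 1)"
      using bp_props(2)[OF \<open>j \<in> {1..m}\<close>, of x] by simp
  qed
  also have "\<dots> = coeff (F - Polynomial.smult (coeff F m) (om x m)) (m - 1)"
    by (simp only: lag_poly[OF assms])
  also have "\<dots> = coeff F (m - 1) + coeff F m * (\<Sum>l=1..m. x l)"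
    using om_props(3)[OF m, of x] by simp
  finally show ?thesis .
qed


definition DL :: "(nat \<Rightarrow> complex) \<Rightarrow> nat \<Rightarrow> complex" where
  "DL x i = (\<Prod>l\<in>{1..<i}. (x i - x l))"
definition DG :: "(nat \<Rightarrow> complex) \<Rightarrow> nat \<Rightarrow> nat \<Rightarrow> complex" where
  "DG x m j = (\<Prod>l\<in>{j<..m}. (x l - x j))"

definition R0 :: "nat \<Rightarrow> (nat \<Rightarrow> complex) \<Rightarrow> (nat \<Rightarrow> complex) \<Rightarrow> complex \<Rightarrow> complex \<Rightarrow> nat \<Rightarrow> complex" where
  "R0 m x y be s j = (-1)^(m-j) * (x j + be) * (\<Prod>l\<in>{1..m-j}. (y l + x j + s)) / DG x m j"
definition C0 :: "nat \<Rightarrow> (nat \<Rightarrow> complex) \<Rightarrow> (nat \<Rightarrow> complex) \<Rightarrow> complex \<Rightarrow> nat \<Rightarrow> complex" where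
  "C0 m x y s i = - (\<Prod>l\<in>{m+1-i..m}. (y l + x i + s)) / DL x i"
definition MM :: "nat \<Rightarrow> (nat \<Rightarrow> complex) \<Rightarrow> (nat \<Rightarrow> complex) \<Rightarrow> complex \<Rightarrow> complex \<Rightarrow> nat \<Rightarrow> nat \<Rightarrow> complex" where
  "MM m x y ga s i j = (-1)^(m-j) * (y j + ga) *
     ((\<Prod>l\<in>{m+1-i..m}-{j}. (y l + x i + s)) * (\<Prod>l\<in>{1..m-j}-{i}. (x l + y j + s)))
     / (DL x i * DG y m j)"

lemma split_set: "j \<le> (m::nat) \<Longrightarrow> {1..m} = {1..m-j} \<union> {m+1-j..m}" unfolding set_eq_iff by (simp; linarith)
lemma split_disj: "{1..(m::nat)-j} \<inter> {m+1-j..m} = {}" unfolding set_eq_iff by (simp; linarith)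

lemma wp_split:
  assumes "j \<in> {1..m}"
  shows "wp x m j = (-1)^(m-j) * DL x j * DG x m j"
proof -
  have e: "{1..m}-{j} = {1..<j} \<union> {j<..m}" using assms by auto
  have "wp x m j = (\<Prod>l\<in>{1..<j}. (x j - x l)) * (\<Prod>l\<in>{j<..m}. (x j - x l))"
    unfolding wp_def e by (rule prod.union_disjoint) auto
  also have "(\<Prod>l\<in>{j<..m}. (x j - x l)) = (\<Prod>l\<in>{j<..m}. (-1) * (x l - x j))"
    by (intro prod.cong) auto
  also have "\<dots> = (-1)^(m-j) * DG x m j"
    unfolding DG_def prod.distrib by simp
  finally show ?thesis unfolding DL_def by simp
qed

lemma DL_nz: assumes "inj_on x {1..m}" "i \<in> {1..m}" shows "DL x i \<noteq> 0"
proof -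
  have "x i - x l \<noteq> 0" if "l \<in> {1..<i}" for l
    using assms that inj_on_eq_iff[OF assms(1)] by fastforce
  then show ?thesis unfolding DL_def by (subst prod_zero_iff) auto
qed

lemma DG_nz: assumes "inj_on x {1..m}" "j \<in> {1..m}" shows "DG x m j \<noteq> 0"
proof -
  have "x l - x j \<noteq> 0" if "l \<in> {j<..m}" for l
    using assms that inj_on_eq_iff[OF assms(1)] by fastforce
  then show ?thesis unfolding DG_def by (subst prod_zero_iff) auto
qed

lemma XY_identity:
  assumes ix: "inj_on x {1..m}" and iy: "inj_on y {1..m}"
    and i: "i \<in> {1..m}" and k: "k \<in> {1..m}"
  shows "C0 m x y s i * R0 m y x ga s k + MM m x y ga s i k * (y k + x i + s) = 0"
proof -
  define U where "U = (\<Prod>l\<in>{m+1-i..m}. (y l + x i + s))"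
  define V where "V = (\<Prod>l\<in>{1..m-k}. (x l + y k + s))"
  define U' where "U' = (\<Prod>l\<in>{m+1-i..m}-{k}. (y l + x i + s))"
  define V' where "V' = (\<Prod>l\<in>{1..m-k}-{i}. (x l + y k + s))"
  have key: "U * V = U' * V' * (y k + x i + s)"
  proof (cases "k \<in> {m+1-i..m}")
    case True
    then have "i \<notin> {1..m-k}" using i k by auto
    then have "V' = V" unfolding V_def V'_def by simp
    moreover have "U = (y k + x i + s) * U'" unfolding U_def U'_def
      using True by (intro prod.remove) auto
    ultimately show ?thesis by (simp add: algebra_simps)
  next
    case False
    then have "i \<in> {1..m-k}" using i k by auto
    then have "V = (x i + y k + s) * V'" unfolding V_def V'_def by (intro prod.remove) auto
    moreover have "U' = U" unfolding U_def U'_def using False by simp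
    ultimately show ?thesis by (simp add: algebra_simps)
  qed
  have "C0 m x y s i * R0 m y x ga s k = - ((-1)^(m-k) * (y k + ga) * (U * V) / (DL x i * DG y m k))"
    unfolding C0_def R0_def U_def V_def by (simp add: field_simps)
  moreover have "MM m x y ga s i k * (y k + x i + s) = (-1)^(m-k) * (y k + ga) * (U' * V' * (y k + x i + s)) / (DL x i * DG y m k)"
    unfolding MM_def U'_def V'_def by (simp add: field_simps)
  ultimately show ?thesis using key by simp
qed


definition PF :: "complex \<Rightarrow> nat set \<Rightarrow> (nat \<Rightarrow> complex) \<Rightarrow> complex poly" where
  "PF c L w = [:c, 1:] * (\<Prod>l\<in>L. [:w l, 1:])"

lemma poly_PF: "poly (PF c L w) t = (t + c) * (\<Prod>l\<in>L. (t + w l))"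
  unfolding PF_def by (simp add: poly_prod algebra_simps)

lemma coeff_PF: "coeff (PF c L w) k = c * coeff (\<Prod>l\<in>L. [:w l, 1:]) k
   + (if k = 0 then 0 else coeff (\<Prod>l\<in>L. [:w l, 1:]) (k - 1))"
  unfolding PF_def by (cases k) (simp_all add: mult_pCons_left)

lemma PF_facts:
  assumes "finite L" "card L = n"
  shows "degree (PF c L w) = n + 1" "coeff (PF c L w) (n + 1) = 1"
    "coeff (PF c L w) n = c + (\<Sum>l\<in>L. w l)"
proof -
  have d: "degree (\<Prod>l\<in>L. [:w l, 1:]) = n" using linprod_deg[OF assms(1)] assms(2) by simp
  have t: "coeff (\<Prod>l\<in>L. [:w l, 1:]) n = 1" using linprod_top[OF assms(1)] assms(2) by simp
  have z: "coeff (\<Prod>l\<in>L. [:w l, 1:]) (n+1) = 0" using d by (simp add: coeff_eq_0)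
  show "degree (PF c L w) = n + 1" unfolding PF_def
    by (subst degree_mult_eq) (use d t in auto)
  show "coeff (PF c L w) (n + 1) = 1" unfolding coeff_PF using t z by simp
  show "coeff (PF c L w) n = c + (\<Sum>l\<in>L. w l)"
  proof (cases "n = 0")
    case True
    then have "L = {}" using assms by simp
    then show ?thesis using True unfolding coeff_PF \<open>L = {}\<close> by simp
  next
    case False
    then show ?thesis unfolding coeff_PF using t linprod_c1[OF assms(1), of w] assms(2) by simp
  qed
qed

lemma sumF1:
  fixes x y :: "nat \<Rightarrow> complex" and ga s :: complex
  assumes iy: "inj_on y {1..m}" and m: "m \<ge> 2" and k: "k \<in> {1..m}"
  shows "(\<Sum>j=1..m. (y j + ga) * (\<Prod>l\<in>{1..m}-{k}. (x l + y j + s)) / wp y m j)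
       = ga + (\<Sum>l\<in>{1..m}-{k}. (x l + s)) + (\<Sum>l=1..m. y l)"
proof -
  let ?F = "PF ga ({1..m}-{k}) (\<lambda>l. x l + s)"
  have c: "card ({1..m}-{k}) = m - 1" using k by simp
  have m1: "m - 1 + 1 = m" using m by simp
  have "(\<Sum>j=1..m. (y j + ga) * (\<Prod>l\<in>{1..m}-{k}. (x l + y j + s)) / wp y m j)
      = (\<Sum>j=1..m. poly ?F (y j) / wp y m j)"
    unfolding poly_PF by (intro sum.cong refl) (simp add: add_ac)
  also have "\<dots> = coeff ?F (m - 1) + coeff ?F m * (\<Sum>l=1..m. y l)"
    by (rule lag_sum[OF iy]) (use m PF_facts(1)[OF _ c] m1 in auto)
  also have "\<dots> = ga + (\<Sum>l\<in>{1..m}-{k}. (x l + s)) + (\<Sum>l=1..m. y l)"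
    using PF_facts(2,3)[OF _ c, of ga "\<lambda>l. x l + s"] m1 by simp
  finally show ?thesis .
qed

lemma sumF2:
  fixes x y :: "nat \<Rightarrow> complex" and ga s :: complex
  assumes iy: "inj_on y {1..m}" and m: "m \<ge> 2" and i: "i \<in> {1..m}" and k: "k \<in> {1..m}" and ik: "i \<noteq> k"
  shows "(\<Sum>j=1..m. (y j + ga) * (\<Prod>l\<in>{1..m}-{i,k}. (x l + y j + s)) / wp y m j) = 1"
proof -
  let ?F = "PF ga ({1..m}-{i,k}) (\<lambda>l. x l + s)"
  have c: "card ({1..m}-{i,k}) = m - 2" using i k ik by (simp add: card_Diff_subset)
  have m1: "m - 2 + 1 = m - 1" using m by simp
  have "(\<Sum>j=1..m. (y j + ga) * (\<Prod>l\<in>{1..m}-{i,k}. (x l + y j + s)) / wp y m j)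
      = (\<Sum>j=1..m. poly ?F (y j) / wp y m j)"
    unfolding poly_PF by (intro sum.cong refl) (simp add: add_ac)
  also have "\<dots> = coeff ?F (m - 1) + coeff ?F m * (\<Sum>l=1..m. y l)"
    by (rule lag_sum[OF iy]) (use m PF_facts(1)[OF _ c] m1 in auto)
  also have "\<dots> = 1"
  proof -
    have "coeff ?F m = 0" using PF_facts(1)[OF _ c, of ga "\<lambda>l. x l + s"] m1 m by (simp add: coeff_eq_0)
    then show ?thesis using PF_facts(2)[OF _ c, of ga "\<lambda>l. x l + s"] m1 by simp
  qed
  finally show ?thesis .
qed

lemma sumF3:
  fixes x y :: "nat \<Rightarrow> complex" and ga s :: complex
  assumes iy: "inj_on y {1..m}" and m: "m \<ge> 2" and i: "i \<in> {1..m}"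
  shows "(\<Sum>j=1..m. (y j + ga) * (\<Prod>l\<in>{1..m}-{i}. (x l + y j + s))
            * (\<Prod>l\<in>{1..m}-{j}. (y l + x i + s)) / wp y m j)
       = (ga - x i - s) * wp x m i + (\<Prod>l\<in>{1..m}. (y l + x i + s))"
proof -
  let ?F = "PF ga ({1..m}-{i}) (\<lambda>l. x l + s)"
  let ?T = "- (x i + s)"
  have c: "card ({1..m}-{i}) = m - 1" using i by simp
  have m1: "m - 1 + 1 = m" using m by simp
  have pr: "(\<Prod>l\<in>{1..m}-{j}. (y l + x i + s)) = (-1)^(m-1) * (\<Prod>l\<in>{1..m}-{j}. (?T - y l))"
    if "j \<in> {1..m}" for j
  proof -
    have "(\<Prod>l\<in>{1..m}-{j}. (y l + x i + s)) = (\<Prod>l\<in>{1..m}-{j}. (-1) * (?T - y l))"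
      by (intro prod.cong) auto
    also have "\<dots> = (-1)^(m-1) * (\<Prod>l\<in>{1..m}-{j}. (?T - y l))"
      unfolding prod.distrib using that by simp
    finally show ?thesis .
  qed
  have "(\<Sum>j=1..m. (y j + ga) * (\<Prod>l\<in>{1..m}-{i}. (x l + y j + s))
            * (\<Prod>l\<in>{1..m}-{j}. (y l + x i + s)) / wp y m j)
      = (-1)^(m-1) * (\<Sum>j=1..m. poly ?F (y j) / wp y m j * (\<Prod>l\<in>{1..m}-{j}. (?T - y l)))"
    unfolding sum_distrib_left poly_PF
  proof (intro sum.cong refl)
    fix j assume j: "j \<in> {1..m}"
    have e: "(\<Prod>l\<in>{1..m}-{i}. (x l + y j + s)) = (\<Prod>l\<in>{1..m}-{i}. (y j + (x l + s)))"
      by (intro prod.cong) (auto simp: add_ac)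
    show "(y j + ga) * (\<Prod>l\<in>{1..m}-{i}. (x l + y j + s)) * (\<Prod>l\<in>{1..m}-{j}. (y l + x i + s)) / wp y m j =
         (-1)^(m-1) * ((y j + ga) * (\<Prod>l\<in>{1..m}-{i}. (y j + (x l + s))) / wp y m j * (\<Prod>l\<in>{1..m}-{j}. (?T - y l)))"
      unfolding pr[OF j] e by simp
  qed
  also have "(\<Sum>j=1..m. poly ?F (y j) / wp y m j * (\<Prod>l\<in>{1..m}-{j}. (?T - y l)))
      = poly ?F ?T - coeff ?F m * (\<Prod>l\<in>{1..m}. (?T - y l))"
    by (rule lag_eval[OF iy]) (use m PF_facts(1)[OF _ c] m1 in auto)
  also have "coeff ?F m = 1" using PF_facts(2)[OF _ c, of ga "\<lambda>l. x l + s"] m1 by simp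
  also have "poly ?F ?T = (ga - x i - s) * (\<Prod>l\<in>{1..m}-{i}. (x l - x i))"
    unfolding poly_PF by (simp add: algebra_simps)
  also have "(\<Prod>l\<in>{1..m}-{i}. (x l - x i)) = (-1)^(m-1) * wp x m i"
  proof -
    have "(\<Prod>l\<in>{1..m}-{i}. (x l - x i)) = (\<Prod>l\<in>{1..m}-{i}. (-1) * (x i - x l))"
      by (intro prod.cong) auto
    then show ?thesis unfolding prod.distrib wp_def using c by simp
  qed
  also have "(\<Prod>l\<in>{1..m}. (?T - y l)) = (-1)^m * (\<Prod>l\<in>{1..m}. (y l + x i + s))"
  proof -
    have "(\<Prod>l\<in>{1..m}. (?T - y l)) = (\<Prod>l\<in>{1..m}. (-1) * (y l + x i + s))"
      by (intro prod.cong) auto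
    then show ?thesis unfolding prod.distrib by simp
  qed
  finally show ?thesis
  proof -
    assume h: "(\<Sum>j=1..m. (y j + ga) * (\<Prod>l\<in>{1..m}-{i}. (x l + y j + s))
            * (\<Prod>l\<in>{1..m}-{j}. (y l + x i + s)) / wp y m j)
      = (-1)^(m-1) * ((ga - x i - s) * ((-1)^(m-1) * wp x m i) - 1 * ((-1)^m * (\<Prod>l\<in>{1..m}. (y l + x i + s))))"
    have e1: "((-1::complex)^(m-1)) * (-1)^(m-1) = 1"
      by (simp add: power_add[symmetric])
    have e2: "((-1::complex)^(m-1)) * (-1)^m = -1"
    proof -
      have "((-1::complex)^(m-1)) * (-1)^m = (-1)^(m - 1 + m)" by (simp add: power_add)
      also have "m - 1 + m = Suc (2 * (m - 1))" using m by simp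
      finally show ?thesis by simp
    qed
    let ?A = "(-1::complex)^(m-1)" and ?B = "(-1::complex)^m" and ?P = "\<Prod>l\<in>{1..m}. (y l + x i + s)"
    have "?A * ((ga - x i - s) * (?A * wp x m i) - 1 * (?B * ?P))
        = (ga - x i - s) * wp x m i * (?A * ?A) - ?P * (?A * ?B)" by (simp add: algebra_simps)
    also have "\<dots> = (ga - x i - s) * wp x m i + ?P" by (simp only: e1 e2) simp
    finally show ?thesis unfolding h .
  qed
qed


lemma prod_remove_if: "finite A \<Longrightarrow> prod g A = prod g (A - {a}) * (if a \<in> A then g a else 1)"
  by (cases "a \<in> A") (simp_all add: prod.remove mult.commute)

lemma prod_split_m:
  fixes g :: "nat \<Rightarrow> complex"
  assumes "j \<le> m"
  shows "prod g ({1..m-j} - B) * prod g ({m+1-j..m} - B) = prod g ({1..m} - B)"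
proof -
  have "{1..m} - B = ({1..m-j} - B) \<union> ({m+1-j..m} - B)" using split_set[OF assms] by auto
  moreover have "({1..m-j} - B) \<inter> ({m+1-j..m} - B) = {}" using split_disj[of m j] by auto
  ultimately show ?thesis by (simp add: prod.union_disjoint[symmetric])
qed

lemma mem_swap1:
  assumes "i \<in> {1..m}" "j \<in> {1..m::nat}"
  shows "(j \<in> {m+1-i..m}) = (i \<in> {m+1-j..m})" "(j \<in> {1..m-i}) = (i \<in> {1..m-j})"
  using assms by auto

lemma frac_aux:
  fixes a b q1 q2 d1 d2 d3 d4 sg tg :: complex
  assumes "sg * sg = 1"
  shows "(sg * a * q1 / (d1 * d2)) * (tg * b * q2 / (d3 * d4)) = tg * b * (q1 * q2) / (d1 * d4) * (a / (sg * d3 * d2))"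
proof -
  have inv: "inverse sg = sg" using assms by (metis inverse_unique)
  show ?thesis by (simp add: divide_inverse inverse_mult_distrib inv mult_ac)
qed

lemma XX_term_ne:
  fixes x y :: "nat \<Rightarrow> complex" and be ga s :: complex
  assumes iy: "inj_on y {1..m}"
    and i: "i \<in> {1..m}" and j: "j \<in> {1..m}" and k: "k \<in> {1..m}" and ik: "i \<noteq> k"
  shows "MM m x y ga s i j * MM m y x be s j k
    = (-1)^(m-k) * (x k + be) * ((\<Prod>l\<in>{m+1-i..m}. (y l + x i + s)) * (\<Prod>l\<in>{1..m-k}. (y l + x k + s)))
       / (DL x i * DG x m k)
      * ((y j + ga) * (\<Prod>l\<in>{1..m}-{i,k}. (x l + y j + s)) / wp y m j)"
proof -
  define g where "g l = x l + y j + s" for l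
  define P1 where "P1 = (\<Prod>l\<in>{m+1-i..m}-{j}. (y l + x i + s))"
  define P2 where "P2 = (\<Prod>l\<in>{1..m-j}-{i}. g l)"
  define P3 where "P3 = (\<Prod>l\<in>{m+1-j..m}-{k}. g l)"
  define P4 where "P4 = (\<Prod>l\<in>{1..m-k}-{j}. (y l + x k + s))"
  define U where "U = (\<Prod>l\<in>{m+1-i..m}. (y l + x i + s))"
  define V where "V = (\<Prod>l\<in>{1..m-k}. (y l + x k + s))"
  define W where "W = (\<Prod>l\<in>{1..m}-{i,k}. g l)"
  have hU: "U = P1 * (if j \<in> {m+1-i..m} then g i else 1)"
    unfolding U_def P1_def g_def by (subst prod_remove_if[of _ _ j]) (auto simp: add_ac)
  have hV: "V = P4 * (if j \<in> {1..m-k} then g k else 1)"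
    unfolding V_def P4_def g_def by (subst prod_remove_if[of _ _ j]) (auto simp: add_ac)
  have h2: "P2 = (\<Prod>l\<in>{1..m-j}-{i,k}. g l) * (if k \<in> {1..m-j} then g k else 1)"
  proof -
    have "P2 = prod g (({1..m-j}-{i}) - {k}) * (if k \<in> {1..m-j}-{i} then g k else 1)"
      unfolding P2_def by (rule prod_remove_if) simp
    moreover have "({1..m-j}-{i}) - {k} = {1..m-j}-{i,k}" by auto
    moreover have "(k \<in> {1..m-j}-{i}) = (k \<in> {1..m-j})" using ik by auto
    ultimately show ?thesis by simp
  qed
  have h3: "P3 = (\<Prod>l\<in>{m+1-j..m}-{i,k}. g l) * (if i \<in> {m+1-j..m} then g i else 1)"
  proof -
    have "P3 = prod g (({m+1-j..m}-{k}) - {i}) * (if i \<in> {m+1-j..m}-{k} then g i else 1)"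
      unfolding P3_def by (rule prod_remove_if) simp
    moreover have "({m+1-j..m}-{k}) - {i} = {m+1-j..m}-{i,k}" by auto
    moreover have "(i \<in> {m+1-j..m}-{k}) = (i \<in> {m+1-j..m})" using ik by auto
    ultimately show ?thesis by simp
  qed
  have hW: "W = (\<Prod>l\<in>{1..m-j}-{i,k}. g l) * (\<Prod>l\<in>{m+1-j..m}-{i,k}. g l)"
    unfolding W_def using prod_split_m[of j m g "{i,k}"] j by simp
  have key: "P1 * P2 * (P3 * P4) = U * V * W"
    unfolding hU hV h2 h3 hW using mem_swap1[OF i j] mem_swap1[OF k j] by (simp add: algebra_simps)
  have wy: "wp y m j = (-1)^(m-j) * DL y j * DG y m j" by (rule wp_split[OF j])
  have nz: "DL y j \<noteq> 0" "DG y m j \<noteq> 0" using DL_nz[OF iy j] DG_nz[OF iy j] by auto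
  have sgn: "((-1::complex)^(m-j)) * (-1)^(m-j) = 1" by (simp add: power_add[symmetric])
  have m1: "MM m x y ga s i j = (-1)^(m-j) * (y j + ga) * (P1 * P2) / (DL x i * DG y m j)"
    unfolding MM_def P1_def P2_def g_def ..
  have m2: "MM m y x be s j k = (-1)^(m-k) * (x k + be) * (P3 * P4) / (DL y j * DG x m k)"
    unfolding MM_def P3_def P4_def g_def ..
  have "MM m x y ga s i j * MM m y x be s j k
      = (-1)^(m-k) * (x k + be) * (P1 * P2 * (P3 * P4)) / (DL x i * DG x m k) * ((y j + ga) / ((-1)^(m-j) * DL y j * DG y m j))"
    unfolding m1 m2 by (rule frac_aux[OF sgn])
  also have "\<dots> = (-1)^(m-k) * (x k + be) * (U * V) / (DL x i * DG x m k) * ((y j + ga) * W / wp y m j)"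
    unfolding key wy by (simp add: field_simps)
  finally show ?thesis unfolding U_def V_def W_def g_def .
qed

lemma inv_sgn: "inverse ((-1::complex)^n) = (-1)^n"
  by (simp add: power_inverse[symmetric])

lemma XX_term_eq:
  fixes x y :: "nat \<Rightarrow> complex" and be ga s :: complex
  assumes i: "i \<in> {1..m}" and j: "j \<in> {1..m}"
  shows "MM m x y ga s i j * MM m y x be s j i
    = (x i + be) / wp x m i
      * ((y j + ga) * (\<Prod>l\<in>{1..m}-{i}. (x l + y j + s)) * (\<Prod>l\<in>{1..m}-{j}. (y l + x i + s)) / wp y m j)"
proof -
  define g where "g l = x l + y j + s" for l
  define h where "h l = y l + x i + s" for l
  define P1 where "P1 = (\<Prod>l\<in>{m+1-i..m}-{j}. h l)"
  define P2 where "P2 = (\<Prod>l\<in>{1..m-j}-{i}. g l)"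
  define P3 where "P3 = (\<Prod>l\<in>{m+1-j..m}-{i}. g l)"
  define P4 where "P4 = (\<Prod>l\<in>{1..m-i}-{j}. h l)"
  have k1: "P4 * P1 = (\<Prod>l\<in>{1..m}-{j}. h l)"
    unfolding P1_def P4_def using prod_split_m[of i m h "{j}"] i by simp
  have k2: "P2 * P3 = (\<Prod>l\<in>{1..m}-{i}. g l)"
    unfolding P2_def P3_def using prod_split_m[of j m g "{i}"] j by simp
  have m1: "MM m x y ga s i j = (-1)^(m-j) * (y j + ga) * (P1 * P2) / (DL x i * DG y m j)"
    unfolding MM_def P1_def P2_def g_def h_def ..
  have m2: "MM m y x be s j i = (-1)^(m-i) * (x i + be) * (P3 * P4) / (DL y j * DG x m i)"
    unfolding MM_def P3_def P4_def g_def h_def ..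
  have "MM m x y ga s i j * MM m y x be s j i
      = (x i + be) / ((-1)^(m-i) * DL x i * DG x m i)
      * ((y j + ga) * ((P2 * P3) * (P4 * P1)) / ((-1)^(m-j) * DL y j * DG y m j))"
    unfolding m1 m2 by (simp add: divide_inverse inverse_mult_distrib inv_sgn mult_ac)
  also have "\<dots> = (x i + be) / wp x m i
      * ((y j + ga) * (\<Prod>l\<in>{1..m}-{i}. (x l + y j + s)) * (\<Prod>l\<in>{1..m}-{j}. (y l + x i + s)) / wp y m j)"
    unfolding k1 k2 wp_split[OF i] wp_split[OF j] g_def h_def by (simp add: mult_ac)
  finally show ?thesis .
qed

lemma OX_term:
  fixes x y :: "nat \<Rightarrow> complex" and be ga s :: complex
  assumes j: "j \<in> {1..m}" and k: "k \<in> {1..m}"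
  shows "R0 m y x ga s j * MM m y x be s j k
    = R0 m x y be s k * ((y j + ga) * (\<Prod>l\<in>{1..m}-{k}. (x l + y j + s)) / wp y m j)"
proof -
  define g where "g l = x l + y j + s" for l
  define Q0 where "Q0 = (\<Prod>l\<in>{1..m-j}. g l)"
  define P3 where "P3 = (\<Prod>l\<in>{m+1-j..m}-{k}. g l)"
  define P4 where "P4 = (\<Prod>l\<in>{1..m-k}-{j}. (y l + x k + s))"
  define V where "V = (\<Prod>l\<in>{1..m-k}. (y l + x k + s))"
  define W where "W = (\<Prod>l\<in>{1..m}-{k}. g l)"
  have hQ: "Q0 = (\<Prod>l\<in>{1..m-j}-{k}. g l) * (if k \<in> {1..m-j} then g k else 1)"
    unfolding Q0_def by (rule prod_remove_if) simp
  have hV: "V = P4 * (if j \<in> {1..m-k} then g k else 1)"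
    unfolding V_def P4_def g_def by (subst prod_remove_if[of _ _ j]) (auto simp: add_ac)
  have hW: "W = (\<Prod>l\<in>{1..m-j}-{k}. g l) * P3"
    unfolding W_def P3_def using prod_split_m[of j m g "{k}"] j by simp
  have key: "Q0 * (P3 * P4) = V * W"
    unfolding hQ hV hW using mem_swap1[OF k j] by (simp add: algebra_simps)
  have m1: "R0 m y x ga s j = (-1)^(m-j) * (y j + ga) * Q0 / DG y m j"
    unfolding R0_def Q0_def g_def ..
  have m2: "MM m y x be s j k = (-1)^(m-k) * (x k + be) * (P3 * P4) / (DL y j * DG x m k)"
    unfolding MM_def P3_def P4_def g_def ..
  have m3: "R0 m x y be s k = (-1)^(m-k) * (x k + be) * V / DG x m k"
    unfolding R0_def V_def ..
  have "R0 m y x ga s j * MM m y x be s j k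
      = (-1)^(m-k) * (x k + be) / DG x m k * ((y j + ga) * (Q0 * (P3 * P4)) / ((-1)^(m-j) * DL y j * DG y m j))"
    unfolding m1 m2 by (simp add: divide_inverse inverse_mult_distrib inv_sgn mult_ac)
  also have "\<dots> = R0 m x y be s k * ((y j + ga) * (\<Prod>l\<in>{1..m}-{k}. (x l + y j + s)) / wp y m j)"
    unfolding key m3 wp_split[OF j] W_def g_def by (simp add: divide_inverse mult_ac)
  finally show ?thesis .
qed

lemma XO_term:
  fixes x y :: "nat \<Rightarrow> complex" and be ga s :: complex
  assumes i: "i \<in> {1..m}" and j: "j \<in> {1..m}"
  shows "MM m x y ga s i j * C0 m y x s j
    = C0 m x y s i * ((y j + ga) * (\<Prod>l\<in>{1..m}-{i}. (x l + y j + s)) / wp y m j)"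
proof -
  define g where "g l = x l + y j + s" for l
  define P1 where "P1 = (\<Prod>l\<in>{m+1-i..m}-{j}. (y l + x i + s))"
  define P2 where "P2 = (\<Prod>l\<in>{1..m-j}-{i}. g l)"
  define Q where "Q = (\<Prod>l\<in>{m+1-j..m}. g l)"
  define U where "U = (\<Prod>l\<in>{m+1-i..m}. (y l + x i + s))"
  define W where "W = (\<Prod>l\<in>{1..m}-{i}. g l)"
  have hU: "U = P1 * (if j \<in> {m+1-i..m} then g i else 1)"
    unfolding U_def P1_def g_def by (subst prod_remove_if[of _ _ j]) (auto simp: add_ac)
  have hQ: "Q = (\<Prod>l\<in>{m+1-j..m}-{i}. g l) * (if i \<in> {m+1-j..m} then g i else 1)"
    unfolding Q_def by (rule prod_remove_if) simp
  have hW: "W = P2 * (\<Prod>l\<in>{m+1-j..m}-{i}. g l)"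
    unfolding W_def P2_def using prod_split_m[of j m g "{i}"] j by simp
  have key: "(P1 * P2) * Q = U * W"
    unfolding hU hQ hW using mem_swap1[OF i j] by (simp add: algebra_simps)
  have m1: "MM m x y ga s i j = (-1)^(m-j) * (y j + ga) * (P1 * P2) / (DL x i * DG y m j)"
    unfolding MM_def P1_def P2_def g_def ..
  have m2: "C0 m y x s j = - Q / DL y j"
    unfolding C0_def Q_def g_def ..
  have m3: "C0 m x y s i = - U / DL x i"
    unfolding C0_def U_def ..
  have "MM m x y ga s i j * C0 m y x s j
      = - (1 / DL x i) * ((y j + ga) * ((P1 * P2) * Q) / ((-1)^(m-j) * DL y j * DG y m j))"
    unfolding m1 m2 by (simp add: divide_inverse inverse_mult_distrib inv_sgn mult_ac)
  also have "\<dots> = C0 m x y s i * ((y j + ga) * (\<Prod>l\<in>{1..m}-{i}. (x l + y j + s)) / wp y m j)"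
    unfolding key m3 wp_split[OF j] W_def g_def by (simp add: divide_inverse mult_ac)
  finally show ?thesis .
qed

lemma OO_term:
  fixes x y :: "nat \<Rightarrow> complex" and be s :: complex
  assumes j: "j \<in> {1..m}"
  shows "R0 m x y be s j * C0 m x y s j = - ((x j + be) * (\<Prod>l\<in>{1..m}. (y l + x j + s)) / wp x m j)"
proof -
  define h where "h l = y l + x j + s" for l
  have k: "(\<Prod>l\<in>{1..m-j}. h l) * (\<Prod>l\<in>{m+1-j..m}. h l) = (\<Prod>l\<in>{1..m}. h l)"
    using prod_split_m[of j m h "{}"] j by simp
  have "R0 m x y be s j * C0 m x y s j
     = - ((x j + be) * ((\<Prod>l\<in>{1..m-j}. h l) * (\<Prod>l\<in>{m+1-j..m}. h l)) / ((-1)^(m-j) * DL x j * DG x m j))"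
    unfolding R0_def C0_def h_def by (simp add: divide_inverse inverse_mult_distrib inv_sgn mult_ac)
  also have "\<dots> = - ((x j + be) * (\<Prod>l\<in>{1..m}. (y l + x j + s)) / wp x m j)"
    unfolding k unfolding wp_split[OF j] h_def ..
  finally show ?thesis .
qed


lemma coeff_lin_mult: fixes c :: complex shows "coeff ([:c, 1:] * p) k = c * coeff p k + (if k = 0 then 0 else coeff p (k - 1))"
  by (cases k) (simp_all add: mult_pCons_left)

lemma SX_lemma:
  fixes x y :: "nat \<Rightarrow> complex" and be s :: complex
  assumes ix: "inj_on x {1..m}" and m: "m \<ge> 2"
  shows "2 * (\<Sum>j=1..m. (x j + be) * (\<Prod>l\<in>{1..m}. (y l + x j + s)) / wp x m j)
     = 2 * be * ((\<Sum>l=1..m. y l) + of_nat m * s + (\<Sum>l=1..m. x l))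
       + ((\<Sum>l=1..m. y l) + of_nat m * s)^2
       - ((\<Sum>l=1..m. (y l)^2) + 2 * s * (\<Sum>l=1..m. y l) + of_nat m * s^2)
       - (\<Sum>l=1..m. x l)^2 + (\<Sum>l=1..m. (x l)^2)
       + 2 * ((\<Sum>l=1..m. y l) + of_nat m * s + (\<Sum>l=1..m. x l)) * (\<Sum>l=1..m. x l)"
proof -
  define G where "G = (\<Prod>l\<in>{1..m}. [:y l + s, 1:])"
  define R where "R = G - om x m"
  define F where "F = [:be, 1:] * R"
  define Y1 where "Y1 = (\<Sum>l=1..m. y l)"
  define Y2 where "Y2 = (\<Sum>l=1..m. (y l)^2)"
  define X1 where "X1 = (\<Sum>l=1..m. x l)"
  define X2 where "X2 = (\<Sum>l=1..m. (x l)^2)"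
  have cm: "card {1..m} = m" by simp
  have dG: "degree G = m" unfolding G_def using linprod_deg[of "{1..m}" "\<lambda>l. y l + s"] by simp
  have tG: "coeff G m = 1" unfolding G_def using linprod_top[of "{1..m}" "\<lambda>l. y l + s"] by simp
  have c1G: "coeff G (m - 1) = Y1 + of_nat m * s"
    unfolding G_def Y1_def using linprod_c1[of "{1..m}" "\<lambda>l. y l + s"] m by (simp add: sum.distrib)
  have c2G: "2 * coeff G (m - 2) = (Y1 + of_nat m * s)^2 - (Y2 + 2 * s * Y1 + of_nat m * s^2)"
  proof -
    have "(\<Sum>l=1..m. (y l + s)^2) = Y2 + 2 * s * Y1 + of_nat m * s^2"
      unfolding Y1_def Y2_def by (simp add: power2_eq_square algebra_simps sum.distrib sum_distrib_left)
    then show ?thesis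
      unfolding G_def Y1_def using linprod_c2[of "{1..m}" "\<lambda>l. y l + s"] m by (simp add: sum.distrib)
  qed
  have dR: "degree R \<le> m - 1"
  proof -
    have "degree R \<le> m" unfolding R_def using dG om_props(1)[of x m] by (metis degree_diff_le order_refl)
    moreover have "coeff R m = 0" unfolding R_def using tG om_props(2)[of x m] by simp
    ultimately show ?thesis
      by (metis (no_types) One_nat_def Suc_pred diff_le_self le_SucE le_antisym leading_coeff_0_iff
          degree_0 m not_le numeral_2_eq_2 zero_less_Suc order_trans le_zero_eq)
  qed
  have dF: "degree F \<le> m"
  proof -
    have "degree F \<le> degree [:be, 1:] + degree R" unfolding F_def by (rule degree_mult_le)
    then show ?thesis using dR m by simp
  qed
  have cR1: "coeff R (m - 1) = Y1 + of_nat m * s + X1"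
    unfolding R_def X1_def using c1G om_props(3)[of m x] m by simp
  have cR2: "2 * coeff R (m - 2) = (Y1 + of_nat m * s)^2 - (Y2 + 2 * s * Y1 + of_nat m * s^2) - (X1^2 - X2)"
    unfolding R_def X1_def X2_def using c2G om_props(4)[of m x] m by (simp add: algebra_simps)
  have cR0: "coeff R m = 0" using dR m by (simp add: coeff_eq_0)
  have cF1: "coeff F (m - 1) = be * (Y1 + of_nat m * s + X1) + coeff R (m - 2)"
  proof -
    have "m - 1 - 1 = m - 2" by simp
    then show ?thesis unfolding F_def coeff_lin_mult using cR1 m by simp
  qed
  have cF0: "coeff F m = Y1 + of_nat m * s + X1"
    unfolding F_def coeff_lin_mult using cR0 cR1 m by simp
  have "(\<Sum>j=1..m. (x j + be) * (\<Prod>l\<in>{1..m}. (y l + x j + s)) / wp x m j)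
      = (\<Sum>j=1..m. poly F (x j) / wp x m j)"
  proof (intro sum.cong refl)
    fix j assume j: "j \<in> {1..m}"
    have "poly (om x m) (x j) = 0" unfolding poly_om by (rule prod_zero) (use j in auto)
    then have "poly F (x j) = (x j + be) * poly G (x j)" unfolding F_def R_def by (simp add: algebra_simps)
    also have "poly G (x j) = (\<Prod>l\<in>{1..m}. (y l + x j + s))" unfolding G_def poly_prod
      by (intro prod.cong) (auto simp: algebra_simps)
    finally show "(x j + be) * (\<Prod>l\<in>{1..m}. (y l + x j + s)) / wp x m j = poly F (x j) / wp x m j" by simp
  qed
  also have "\<dots> = coeff F (m - 1) + coeff F m * X1"
    unfolding X1_def by (rule lag_sum[OF ix _ dF]) (use m in simp)
  finally have "2 * (\<Sum>j=1..m. (x j + be) * (\<Prod>l\<in>{1..m}. (y l + x j + s)) / wp x m j)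
      = 2 * be * (Y1 + of_nat m * s + X1) + 2 * coeff R (m - 2) + 2 * (Y1 + of_nat m * s + X1) * X1"
    unfolding cF1 cF0 by (simp add: algebra_simps)
  then show ?thesis unfolding cR2 Y1_def Y2_def X1_def X2_def by (simp add: algebra_simps)
qed


lemma XX_identity:
  fixes x y :: "nat \<Rightarrow> complex" and be ga s a1 a2 :: complex
  assumes ix: "inj_on x {1..m}" and iy: "inj_on y {1..m}" and m: "m \<ge> 2"
    and i: "i \<in> {1..m}" and k: "k \<in> {1..m}" and s: "s = be + ga + a1 - a2"
  shows "C0 m x y s i * R0 m x y be s k + (\<Sum>j=1..m. MM m x y ga s i j * MM m y x be s j k)
         + (if i = k then (x i + be) * (x i + be + a1 - a2) else 0) = 0"
proof (cases "i = k")
  case False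
  define K where "K = (-1)^(m-k) * (x k + be) * ((\<Prod>l\<in>{m+1-i..m}. (y l + x i + s)) * (\<Prod>l\<in>{1..m-k}. (y l + x k + s)))
       / (DL x i * DG x m k)"
  have "(\<Sum>j=1..m. MM m x y ga s i j * MM m y x be s j k)
      = (\<Sum>j=1..m. K * ((y j + ga) * (\<Prod>l\<in>{1..m}-{i,k}. (x l + y j + s)) / wp y m j))"
    unfolding K_def by (intro sum.cong refl XX_term_ne[OF iy i _ k False]) auto
  also have "\<dots> = K" unfolding sum_distrib_left[symmetric] sumF2[OF iy m i k False] by simp
  finally have "(\<Sum>j=1..m. MM m x y ga s i j * MM m y x be s j k) = K" .
  moreover have "C0 m x y s i * R0 m x y be s k = - K"
    unfolding C0_def R0_def K_def by (simp add: field_simps)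
  ultimately show ?thesis using False by simp
next
  case True
  then have k: "k = i" by simp
  have w: "wp x m i \<noteq> 0" by (rule wp_nz[OF ix i])
  define Uf where "Uf = (\<Prod>l\<in>{1..m}. (y l + x i + s))"
  have "(\<Sum>j=1..m. MM m x y ga s i j * MM m y x be s j i)
      = (\<Sum>j=1..m. (x i + be) / wp x m i * ((y j + ga) * (\<Prod>l\<in>{1..m}-{i}. (x l + y j + s))
           * (\<Prod>l\<in>{1..m}-{j}. (y l + x i + s)) / wp y m j))"
    by (intro sum.cong refl XX_term_eq[OF i]) auto
  also have "\<dots> = (x i + be) / wp x m i * ((ga - x i - s) * wp x m i + Uf)"
    unfolding sum_distrib_left[symmetric] sumF3[OF iy m i] Uf_def ..
  also have "\<dots> = (x i + be) * (ga - x i - s) + (x i + be) * Uf / wp x m i"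
    using w by (simp add: field_simps)
  finally have S: "(\<Sum>j=1..m. MM m x y ga s i j * MM m y x be s j i)
      = (x i + be) * (ga - x i - s) + (x i + be) * Uf / wp x m i" .
  have CR: "C0 m x y s i * R0 m x y be s i = - ((x i + be) * Uf / wp x m i)"
    unfolding Uf_def using OO_term[OF i, of x y be s] by (simp add: mult.commute)
  have "C0 m x y s i * R0 m x y be s k + (\<Sum>j=1..m. MM m x y ga s i j * MM m y x be s j k)
         + (if i = k then (x i + be) * (x i + be + a1 - a2) else 0)
       = (x i + be) * (ga - x i - s + (x i + be + a1 - a2))"
    unfolding k if_P[OF refl] CR S by (simp add: algebra_simps)
  also have "\<dots> = 0" unfolding s by simp
  finally show ?thesis .
qed

lemma sum_minus_one:
  fixes x :: "nat \<Rightarrow> complex"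
  assumes k: "k \<in> {1..m}"
  shows "(\<Sum>l\<in>{1..m}-{k}. (x l + s)) = (\<Sum>l=1..m. x l) - x k + (of_nat m - 1) * s"
proof -
  have "(\<Sum>l\<in>{1..m}-{k}. (x l + s)) = (\<Sum>l=1..m. (x l + s)) - (x k + s)"
    by (subst sum_diff1) (use k in \<open>simp_all add: algebra_simps\<close>)
  also have "\<dots> = (\<Sum>l=1..m. x l) - x k + (of_nat m - 1) * s"
    by (simp add: sum.distrib algebra_simps)
  finally show ?thesis .
qed

lemma OX_identity:
  fixes x y :: "nat \<Rightarrow> complex" and be ga s a1 a2 d :: complex
  assumes iy: "inj_on y {1..m}" and m: "m \<ge> 2" and k: "k \<in> {1..m}"
    and d: "d = a2 - be - ga - (\<Sum>l=1..m. x l) - (\<Sum>l=1..m. y l) - (of_nat m - 1) * s"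
  shows "d * R0 m x y be s k + R0 m x y be s k * (x k + be + a1)
     + (\<Sum>j=1..m. R0 m y x ga s j * MM m y x be s j k) - (a1 + a2) * R0 m x y be s k = 0"
proof -
  have "(\<Sum>j=1..m. R0 m y x ga s j * MM m y x be s j k)
      = (\<Sum>j=1..m. R0 m x y be s k * ((y j + ga) * (\<Prod>l\<in>{1..m}-{k}. (x l + y j + s)) / wp y m j))"
    by (intro sum.cong refl OX_term[OF _ k]) auto
  also have "\<dots> = R0 m x y be s k * (ga + ((\<Sum>l=1..m. x l) - x k + (of_nat m - 1) * s) + (\<Sum>l=1..m. y l))"
    unfolding sum_distrib_left[symmetric] sumF1[OF iy m k] sum_minus_one[OF k] ..
  finally show ?thesis unfolding d by (simp add: algebra_simps)
qed

lemma XO_identity: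
  fixes x y :: "nat \<Rightarrow> complex" and be ga s a1 a2 d :: complex
  assumes iy: "inj_on y {1..m}" and m: "m \<ge> 2" and i: "i \<in> {1..m}"
    and d: "d = a2 - be - ga - (\<Sum>l=1..m. x l) - (\<Sum>l=1..m. y l) - (of_nat m - 1) * s"
  shows "C0 m x y s i * d + (x i + be + a1) * C0 m x y s i
     + (\<Sum>j=1..m. MM m x y ga s i j * C0 m y x s j) - (a1 + a2) * C0 m x y s i = 0"
proof -
  have "(\<Sum>j=1..m. MM m x y ga s i j * C0 m y x s j)
      = (\<Sum>j=1..m. C0 m x y s i * ((y j + ga) * (\<Prod>l\<in>{1..m}-{i}. (x l + y j + s)) / wp y m j))"
    by (intro sum.cong refl XO_term[OF i]) auto
  also have "\<dots> = C0 m x y s i * (ga + ((\<Sum>l=1..m. x l) - x i + (of_nat m - 1) * s) + (\<Sum>l=1..m. y l))"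
    unfolding sum_distrib_left[symmetric] sumF1[OF iy m i] sum_minus_one[OF i] ..
  finally show ?thesis unfolding d by (simp add: algebra_simps)
qed

lemma OO_identity:
  fixes x y :: "nat \<Rightarrow> complex" and be ga s a1 a2 d :: complex
  assumes ix: "inj_on x {1..m}" and iy: "inj_on y {1..m}" and m: "m \<ge> 2"
    and s: "s = be + ga + a1 - a2"
    and d: "d = a2 - be - ga - (\<Sum>l=1..m. x l) - (\<Sum>l=1..m. y l) - (of_nat m - 1) * s"
  shows "d * d + (\<Sum>j=1..m. R0 m x y be s j * C0 m x y s j) + (\<Sum>j=1..m. R0 m y x ga s j * C0 m y x s j)
     - (a1 + a2) * d + a1 * a2 = 0"
proof -
  define X1 where "X1 = (\<Sum>l=1..m. x l)"
  define X2 where "X2 = (\<Sum>l=1..m. (x l)^2)"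
  define Y1 where "Y1 = (\<Sum>l=1..m. y l)"
  define Y2 where "Y2 = (\<Sum>l=1..m. (y l)^2)"
  define SA where "SA = (\<Sum>j=1..m. (x j + be) * (\<Prod>l\<in>{1..m}. (y l + x j + s)) / wp x m j)"
  define SB where "SB = (\<Sum>j=1..m. (y j + ga) * (\<Prod>l\<in>{1..m}. (x l + y j + s)) / wp y m j)"
  have A: "(\<Sum>j=1..m. R0 m x y be s j * C0 m x y s j) = - SA"
    unfolding SA_def sum_negf[symmetric] by (intro sum.cong refl OO_term) auto
  have B: "(\<Sum>j=1..m. R0 m y x ga s j * C0 m y x s j) = - SB"
    unfolding SB_def sum_negf[symmetric] by (intro sum.cong refl OO_term) auto
  have SA': "2 * SA = 2 * be * (Y1 + of_nat m * s + X1) + (Y1 + of_nat m * s)^2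
       - (Y2 + 2 * s * Y1 + of_nat m * s^2) - X1^2 + X2 + 2 * (Y1 + of_nat m * s + X1) * X1"
    unfolding SA_def X1_def X2_def Y1_def Y2_def by (rule SX_lemma[OF ix m])
  have SB': "2 * SB = 2 * ga * (X1 + of_nat m * s + Y1) + (X1 + of_nat m * s)^2
       - (X2 + 2 * s * X1 + of_nat m * s^2) - Y1^2 + Y2 + 2 * (X1 + of_nat m * s + Y1) * Y1"
    unfolding SB_def X1_def X2_def Y1_def Y2_def by (rule SX_lemma[OF iy m])
  have dd: "d = a2 - be - ga - X1 - Y1 - (of_nat m - 1) * s" unfolding d X1_def Y1_def ..
  have "2 * (d * d + (\<Sum>j=1..m. R0 m x y be s j * C0 m x y s j) + (\<Sum>j=1..m. R0 m y x ga s j * C0 m y x s j)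
     - (a1 + a2) * d + a1 * a2) = 2 * d * d - 2 * SA - 2 * SB - 2 * (a1 + a2) * d + 2 * a1 * a2"
    unfolding A B by (simp add: algebra_simps)
  also have "\<dots> = 0"
    unfolding SA' SB' dd s by (simp add: algebra_simps power2_eq_square)
  finally have h: "2 * (d * d + (\<Sum>j=1..m. R0 m x y be s j * C0 m x y s j) + (\<Sum>j=1..m. R0 m y x ga s j * C0 m y x s j)
     - (a1 + a2) * d + a1 * a2) = 0" .
  show ?thesis using h by (metis mult_eq_0_iff zero_neq_numeral)
qed


definition Gent :: "nat \<Rightarrow> (nat \<Rightarrow> complex) \<Rightarrow> (nat \<Rightarrow> complex) \<Rightarrow> complex \<Rightarrow> complex \<Rightarrow> complex \<Rightarrow> complex \<Rightarrow> complex \<Rightarrow> nat \<Rightarrow> nat \<Rightarrow> complex" where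
  "Gent m x y be ga a1 s d r c =
    (if r = 0 then (if c = 0 then d else if c \<le> m then R0 m x y be s c else R0 m y x ga s (c - m))
     else if r \<le> m then (if c = 0 then C0 m x y s r else if c \<le> m then (if r = c then x r + be + a1 else 0)
                         else MM m x y ga s r (c - m))
     else (if c = 0 then C0 m y x s (r - m) else if c \<le> m then MM m y x be s (r - m) c
           else (if r = c then y (r - m) + ga + a1 else 0)))"

lemma G_simps:
  assumes i: "i \<in> {1..m}" and k: "k \<in> {1..m}"
  shows "Gent m x y be ga a1 s d 0 0 = d"
    "Gent m x y be ga a1 s d 0 k = R0 m x y be s k"
    "Gent m x y be ga a1 s d 0 (m + k) = R0 m y x ga s k"
    "Gent m x y be ga a1 s d i 0 = C0 m x y s i"
    "Gent m x y be ga a1 s d (m + i) 0 = C0 m y x s i"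
    "Gent m x y be ga a1 s d i k = (if i = k then x i + be + a1 else 0)"
    "Gent m x y be ga a1 s d i (m + k) = MM m x y ga s i k"
    "Gent m x y be ga a1 s d (m + i) k = MM m y x be s i k"
    "Gent m x y be ga a1 s d (m + i) (m + k) = (if i = k then y i + ga + a1 else 0)"
  using i k unfolding Gent_def by auto

lemma sum_split3:
  fixes f :: "nat \<Rightarrow> complex"
  shows "(\<Sum>t<2*m+1. f t) = f 0 + (\<Sum>t=1..m. f t) + (\<Sum>t=1..m. f (m + t))"
proof -
  have e: "{..<2*m+1} = insert 0 ({1..m} \<union> (\<lambda>t. m + t) ` {1..m})"
    unfolding set_eq_iff
  proof (intro allI iffI)
    fix t assume "t \<in> {..<2*m+1}"
    then have "t = 0 \<or> t \<in> {1..m} \<or> (t - m \<in> {1..m} \<and> t = m + (t - m))" by auto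
    then show "t \<in> insert 0 ({1..m} \<union> (\<lambda>t. m + t) ` {1..m})" by blast
  qed auto
  have "(\<Sum>t<2*m+1. f t) = f 0 + sum f ({1..m} \<union> (\<lambda>t. m + t) ` {1..m})"
    unfolding e by (subst sum.insert) auto
  also have "sum f ({1..m} \<union> (\<lambda>t. m + t) ` {1..m}) = sum f {1..m} + sum f ((\<lambda>t. m + t) ` {1..m})"
    by (rule sum.union_disjoint) auto
  also have "sum f ((\<lambda>t. m + t) ` {1..m}) = (\<Sum>t=1..m. f (m + t))"
    by (subst sum.reindex) (auto simp: inj_on_def)
  finally show ?thesis by simp
qed

lemma sum_single:
  fixes g :: "nat \<Rightarrow> complex"
  assumes "k \<in> {1..m}" "\<And>t. t \<in> {1..m} \<Longrightarrow> t \<noteq> k \<Longrightarrow> g t = 0"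
  shows "(\<Sum>t=1..m. g t) = g k"
proof -
  have "(\<Sum>t=1..m. g t) = g k + (\<Sum>t\<in>{1..m}-{k}. g t)" by (rule sum.remove) (use assms in auto)
  also have "(\<Sum>t\<in>{1..m}-{k}. g t) = 0" by (rule sum.neutral) (use assms in auto)
  finally show ?thesis by simp
qed

lemma sum_delta_l:
  fixes f :: "nat \<Rightarrow> complex"
  assumes "k \<in> {1..m}"
  shows "(\<Sum>t=1..m. (if k = t then a else 0) * f t) = a * f k"
    "(\<Sum>t=1..m. f t * (if t = k then a else 0)) = f k * a"
proof -
  show "(\<Sum>t=1..m. (if k = t then a else 0) * f t) = a * f k"
    by (subst sum_single[OF assms]) auto
  show "(\<Sum>t=1..m. f t * (if t = k then a else 0)) = f k * a"
    by (subst sum_single[OF assms]) auto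
qed


lemma GS:
  "Gent m x y be ga a1 s d 0 0 = d"
  "k \<in> {1..m} \<Longrightarrow> Gent m x y be ga a1 s d 0 k = R0 m x y be s k"
  "k \<in> {1..m} \<Longrightarrow> Gent m x y be ga a1 s d 0 (m + k) = R0 m y x ga s k"
  "i \<in> {1..m} \<Longrightarrow> Gent m x y be ga a1 s d i 0 = C0 m x y s i"
  "i \<in> {1..m} \<Longrightarrow> Gent m x y be ga a1 s d (m + i) 0 = C0 m y x s i"
  "i \<in> {1..m} \<Longrightarrow> k \<in> {1..m} \<Longrightarrow> Gent m x y be ga a1 s d i k = (if i = k then x i + be + a1 else 0)"
  "i \<in> {1..m} \<Longrightarrow> k \<in> {1..m} \<Longrightarrow> Gent m x y be ga a1 s d i (m + k) = MM m x y ga s i k"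
  "i \<in> {1..m} \<Longrightarrow> k \<in> {1..m} \<Longrightarrow> Gent m x y be ga a1 s d (m + i) k = MM m y x be s i k"
  "i \<in> {1..m} \<Longrightarrow> k \<in> {1..m} \<Longrightarrow> Gent m x y be ga a1 s d (m + i) (m + k) = (if i = k then y i + ga + a1 else 0)"
  unfolding Gent_def by auto

lemma GS2:
  "k \<in> {1..m} \<Longrightarrow> Gent m x y be ga a1 s d 0 (k + m) = R0 m y x ga s k"
  "i \<in> {1..m} \<Longrightarrow> Gent m x y be ga a1 s d (i + m) 0 = C0 m y x s i"
  "i \<in> {1..m} \<Longrightarrow> k \<in> {1..m} \<Longrightarrow> Gent m x y be ga a1 s d i (k + m) = MM m x y ga s i k"
  "i \<in> {1..m} \<Longrightarrow> k \<in> {1..m} \<Longrightarrow> Gent m x y be ga a1 s d (i + m) k = MM m y x be s i k"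
  "i \<in> {1..m} \<Longrightarrow> k \<in> {1..m} \<Longrightarrow> Gent m x y be ga a1 s d (i + m) (k + m) = (if i = k then y i + ga + a1 else 0)"
  unfolding Gent_def by auto

context
  fixes m :: nat and x y :: "nat \<Rightarrow> complex" and be ga a1 a2 s d :: complex
  assumes ix: "inj_on x {1..m}" and iy: "inj_on y {1..m}" and m2: "m \<ge> 2"
    and sdef: "s = be + ga + a1 - a2"
    and ddef: "d = a2 - be - ga - (\<Sum>l=1..m. x l) - (\<Sum>l=1..m. y l) - (of_nat m - 1) * s"
begin

abbreviation "G \<equiv> Gent m x y be ga a1 s d"

lemma ddef': "d = a2 - ga - be - (\<Sum>l=1..m. y l) - (\<Sum>l=1..m. x l) - (of_nat m - 1) * s"
  using ddef by simp
lemma sdef': "s = ga + be + a1 - a2" using sdef by simp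

lemma c00: "(\<Sum>t<2*m+1. G 0 t * G t 0) - (a1 + a2) * G 0 0 + a1 * a2 = 0"
proof -
  have X: "(\<Sum>t=1..m. G 0 t * G t 0) = (\<Sum>j=1..m. R0 m x y be s j * C0 m x y s j)"
    by (intro sum.cong refl) (simp add: GS)
  have Y: "(\<Sum>t=1..m. G 0 (m + t) * G (m + t) 0) = (\<Sum>j=1..m. R0 m y x ga s j * C0 m y x s j)"
    by (intro sum.cong refl) (simp add: GS)
  show ?thesis unfolding sum_split3 X Y GS(1) using OO_identity[OF ix iy m2 sdef ddef] by simp
qed

lemma c0X: assumes k: "k \<in> {1..m}"
  shows "(\<Sum>t<2*m+1. G 0 t * G t k) - (a1 + a2) * G 0 k = 0"
proof -
  have X: "(\<Sum>t=1..m. G 0 t * G t k) = G 0 k * G k k"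
    by (rule sum_single[OF k]) (use k in \<open>simp add: GS\<close>)
  have Y: "(\<Sum>t=1..m. G 0 (m + t) * G (m + t) k) = (\<Sum>j=1..m. R0 m y x ga s j * MM m y x be s j k)"
    by (intro sum.cong refl) (use k in \<open>simp add: GS\<close>)
  show ?thesis unfolding sum_split3 X Y using OX_identity[OF iy m2 k ddef] k by (simp add: GS GS2 algebra_simps)
qed

lemma c0Y: assumes k: "k \<in> {1..m}"
  shows "(\<Sum>t<2*m+1. G 0 t * G t (m + k)) - (a1 + a2) * G 0 (m + k) = 0"
proof -
  have X: "(\<Sum>t=1..m. G 0 t * G t (m + k)) = (\<Sum>j=1..m. R0 m x y be s j * MM m x y ga s j k)"
    by (intro sum.cong refl) (use k in \<open>simp add: GS\<close>)
  have Y: "(\<Sum>t=1..m. G 0 (m + t) * G (m + t) (m + k)) = G 0 (m + k) * G (m + k) (m + k)"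
    by (rule sum_single[OF k]) (use k in \<open>simp add: GS\<close>)
  show ?thesis unfolding sum_split3 X Y using OX_identity[OF ix m2 k ddef'] k by (simp add: GS GS2 algebra_simps)
qed

lemma cX0: assumes i: "i \<in> {1..m}"
  shows "(\<Sum>t<2*m+1. G i t * G t 0) - (a1 + a2) * G i 0 = 0"
proof -
  have X: "(\<Sum>t=1..m. G i t * G t 0) = G i i * G i 0"
    by (rule sum_single[OF i]) (use i in \<open>simp add: GS\<close>)
  have Y: "(\<Sum>t=1..m. G i (m + t) * G (m + t) 0) = (\<Sum>j=1..m. MM m x y ga s i j * C0 m y x s j)"
    by (intro sum.cong refl) (use i in \<open>simp add: GS\<close>)
  show ?thesis unfolding sum_split3 X Y using XO_identity[OF iy m2 i ddef] i by (simp add: GS GS2 algebra_simps)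
qed

lemma cY0: assumes i: "i \<in> {1..m}"
  shows "(\<Sum>t<2*m+1. G (m + i) t * G t 0) - (a1 + a2) * G (m + i) 0 = 0"
proof -
  have X: "(\<Sum>t=1..m. G (m + i) t * G t 0) = (\<Sum>j=1..m. MM m y x be s i j * C0 m x y s j)"
    by (intro sum.cong refl) (use i in \<open>simp add: GS\<close>)
  have Y: "(\<Sum>t=1..m. G (m + i) (m + t) * G (m + t) 0) = G (m + i) (m + i) * G (m + i) 0"
    by (rule sum_single[OF i]) (use i in \<open>simp add: GS\<close>)
  show ?thesis unfolding sum_split3 X Y using XO_identity[OF ix m2 i ddef'] i by (simp add: GS GS2 algebra_simps)
qed

lemma cXY: assumes i: "i \<in> {1..m}" and k: "k \<in> {1..m}"
  shows "(\<Sum>t<2*m+1. G i t * G t (m + k)) - (a1 + a2) * G i (m + k) = 0"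
proof -
  have X: "(\<Sum>t=1..m. G i t * G t (m + k)) = G i i * G i (m + k)"
    by (rule sum_single[OF i]) (use i k in \<open>simp add: GS\<close>)
  have Y: "(\<Sum>t=1..m. G i (m + t) * G (m + t) (m + k)) = G i (m + k) * G (m + k) (m + k)"
    by (rule sum_single[OF k]) (use i k in \<open>simp add: GS\<close>)
  have e: "(x i + be + a1) + (y k + ga + a1) - (a1 + a2) = y k + x i + s" using sdef by simp
  have "(\<Sum>t<2*m+1. G i t * G t (m + k)) - (a1 + a2) * G i (m + k)
     = C0 m x y s i * R0 m y x ga s k + MM m x y ga s i k * ((x i + be + a1) + (y k + ga + a1) - (a1 + a2))"
    unfolding sum_split3 X Y using i k by (simp add: GS GS2 algebra_simps)
  also have "\<dots> = 0" unfolding e by (rule XY_identity[OF ix iy i k])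
  finally show ?thesis .
qed

lemma cYX: assumes i: "i \<in> {1..m}" and k: "k \<in> {1..m}"
  shows "(\<Sum>t<2*m+1. G (m + i) t * G t k) - (a1 + a2) * G (m + i) k = 0"
proof -
  have X: "(\<Sum>t=1..m. G (m + i) t * G t k) = G (m + i) k * G k k"
    by (rule sum_single[OF k]) (use i k in \<open>simp add: GS\<close>)
  have Y: "(\<Sum>t=1..m. G (m + i) (m + t) * G (m + t) k) = G (m + i) (m + i) * G (m + i) k"
    by (rule sum_single[OF i]) (use i k in \<open>simp add: GS\<close>)
  have e: "(y i + ga + a1) + (x k + be + a1) - (a1 + a2) = x k + y i + s" using sdef by simp
  have "(\<Sum>t<2*m+1. G (m + i) t * G t k) - (a1 + a2) * G (m + i) k
     = C0 m y x s i * R0 m x y be s k + MM m y x be s i k * ((y i + ga + a1) + (x k + be + a1) - (a1 + a2))"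
    unfolding sum_split3 X Y using i k by (simp add: GS GS2 algebra_simps)
  also have "\<dots> = 0" unfolding e by (rule XY_identity[OF iy ix i k])
  finally show ?thesis .
qed

lemma cXX: assumes i: "i \<in> {1..m}" and k: "k \<in> {1..m}"
  shows "(\<Sum>t<2*m+1. G i t * G t k) - (a1 + a2) * G i k + (if i = k then a1 * a2 else 0) = 0"
proof -
  have X: "(\<Sum>t=1..m. G i t * G t k) = G i i * G i k"
    by (rule sum_single[OF i]) (use i k in \<open>simp add: GS\<close>)
  have Y: "(\<Sum>t=1..m. G i (m + t) * G (m + t) k) = (\<Sum>j=1..m. MM m x y ga s i j * MM m y x be s j k)"
    by (intro sum.cong refl) (use i k in \<open>simp add: GS\<close>)
  have "(\<Sum>t<2*m+1. G i t * G t k) - (a1 + a2) * G i k + (if i = k then a1 * a2 else 0)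
     = C0 m x y s i * R0 m x y be s k + (\<Sum>j=1..m. MM m x y ga s i j * MM m y x be s j k)
       + (if i = k then (x i + be) * (x i + be + a1 - a2) else 0)"
    unfolding sum_split3 X Y using i k by (cases "i = k") (simp_all add: GS GS2 algebra_simps)
  also have "\<dots> = 0" by (rule XX_identity[OF ix iy m2 i k sdef])
  finally show ?thesis .
qed

lemma cYY: assumes i: "i \<in> {1..m}" and k: "k \<in> {1..m}"
  shows "(\<Sum>t<2*m+1. G (m + i) t * G t (m + k)) - (a1 + a2) * G (m + i) (m + k) + (if i = k then a1 * a2 else 0) = 0"
proof -
  have X: "(\<Sum>t=1..m. G (m + i) t * G t (m + k)) = (\<Sum>j=1..m. MM m y x be s i j * MM m x y ga s j k)"
    by (intro sum.cong refl) (use i k in \<open>simp add: GS\<close>)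
  have Y: "(\<Sum>t=1..m. G (m + i) (m + t) * G (m + t) (m + k)) = G (m + i) (m + i) * G (m + i) (m + k)"
    by (rule sum_single[OF i]) (use i k in \<open>simp add: GS\<close>)
  have "(\<Sum>t<2*m+1. G (m + i) t * G t (m + k)) - (a1 + a2) * G (m + i) (m + k) + (if i = k then a1 * a2 else 0)
     = C0 m y x s i * R0 m y x ga s k + (\<Sum>j=1..m. MM m y x be s i j * MM m x y ga s j k)
       + (if i = k then (y i + ga) * (y i + ga + a1 - a2) else 0)"
    unfolding sum_split3 X Y using i k by (cases "i = k") (simp_all add: GS GS2 algebra_simps)
  also have "\<dots> = 0" by (rule XX_identity[OF iy ix m2 i k sdef'])
  finally show ?thesis .
qed

end


definition mtr :: "complex mat \<Rightarrow> complex" where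
  "mtr M = (\<Sum>i<dim_row M. M $$ (i,i))"

lemma mtr_comm:
  assumes X: "X \<in> carrier_mat n n" and Y: "Y \<in> carrier_mat n n"
  shows "mtr (X * Y) = mtr (Y * X)"
proof -
  have "mtr (X * Y) = (\<Sum>i<n. \<Sum>k<n. X $$ (i,k) * Y $$ (k,i))"
    unfolding mtr_def using X Y by (simp add: scalar_prod_def lessThan_atLeast0)
  also have "\<dots> = (\<Sum>k<n. \<Sum>i<n. Y $$ (k,i) * X $$ (i,k))"
    by (subst sum.swap) (simp add: mult.commute)
  also have "\<dots> = mtr (Y * X)"
    unfolding mtr_def using X Y by (simp add: scalar_prod_def lessThan_atLeast0)
  finally show ?thesis .
qed

lemma blocks_quad:
  fixes L :: "(nat \<times> complex) list" and b c :: complex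
  assumes "\<forall>i<sum_list (map fst L). \<forall>j<sum_list (map fst L).
     diag_block_mat (map (\<lambda>(n,a). jordan_block n a ^\<^sub>m 2) L) $$ (i,j) + (if i = j then c else 0)
       = b * jordan_matrix L $$ (i,j)"
    and "(n, a) \<in> set L" and "n \<ge> 1"
  shows "a * a + c = b * a \<and> (n \<ge> 2 \<longrightarrow> 2 * a = b)"
  using assms
proof (induction L)
  case Nil
  then show ?case by simp
next
  case (Cons p L)
  obtain n0 a0 where p: "p = (n0, a0)" by force
  let ?B = "jordan_block n0 a0"
  let ?B2 = "jordan_block n0 a0 ^\<^sub>m 2"
  let ?R = "jordan_matrix L"
  let ?R2 = "diag_block_mat (map (\<lambda>(n,a). jordan_block n a ^\<^sub>m 2) L)"
  let ?N = "sum_list (map fst L)"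
  have dR: "dim_row ?R = ?N" "dim_col ?R = ?N" using jordan_matrix_dim[of L] by auto
  have dR2: "dim_row ?R2 = ?N" "dim_col ?R2 = ?N"
    using jordan_matrix_pow[of L 2] by (metis jordan_matrix_dim pow_mat_dim_square jordan_matrix_carrier)+
  have J: "jordan_matrix (p # L) = four_block_mat ?B (0\<^sub>m n0 ?N) (0\<^sub>m ?N n0) ?R"
    unfolding p jordan_matrix_def by (simp add: Let_def jordan_matrix_def[symmetric])
  have J2: "diag_block_mat (map (\<lambda>(n,a). jordan_block n a ^\<^sub>m 2) (p # L)) = four_block_mat ?B2 (0\<^sub>m n0 ?N) (0\<^sub>m ?N n0) ?R2"
    unfolding p using dR2 by (simp add: Let_def)
  have sN: "sum_list (map fst (p # L)) = n0 + ?N" unfolding p by simp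
  have H: "\<forall>i<n0 + ?N. \<forall>j<n0 + ?N. four_block_mat ?B2 (0\<^sub>m n0 ?N) (0\<^sub>m ?N n0) ?R2 $$ (i,j) + (if i = j then c else 0)
       = b * four_block_mat ?B (0\<^sub>m n0 ?N) (0\<^sub>m ?N n0) ?R $$ (i,j)"
    using Cons.prems(1) unfolding J J2 sN .
  show ?case
  proof (cases "(n, a) = (n0, a0)")
    case True
    then have nn: "n = n0" "a = a0" by auto
    have h00: "?B2 $$ (0,0) + c = b * ?B $$ (0,0)"
      using H[rule_format, of 0 0] Cons.prems(3) nn dR dR2 by simp
    have b00: "?B2 $$ (0,0) = a * a" "?B $$ (0,0) = a"
      using Cons.prems(3) nn by (simp_all add: jordan_block_pow power2_eq_square)
    have h01: "n \<ge> 2 \<Longrightarrow> ?B2 $$ (0,1) = b * ?B $$ (0,1)"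
      using H[rule_format, of 0 1] nn dR dR2 by simp
    have b01: "n \<ge> 2 \<Longrightarrow> ?B2 $$ (0,1) = 2 * a \<and> ?B $$ (0,1) = 1"
      using nn by (simp add: jordan_block_pow)
    show ?thesis using h00 b00 h01 b01 by auto
  next
    case False
    then have mem: "(n, a) \<in> set L" using Cons.prems(2) p by auto
    have "\<forall>i<?N. \<forall>j<?N. ?R2 $$ (i,j) + (if i = j then c else 0) = b * ?R $$ (i,j)"
    proof (intro allI impI)
      fix i j assume i: "i < ?N" and j: "j < ?N"
      show "?R2 $$ (i,j) + (if i = j then c else 0) = b * ?R $$ (i,j)"
        using H[rule_format, of "n0 + i" "n0 + j"] i j dR dR2 by simp
    qed
    then show ?thesis using Cons.IH mem Cons.prems(3) by blast
  qed
qed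

lemma ones_props:
  fixes L :: "(nat \<times> complex) list"
  assumes "\<forall>p\<in>set L. fst p = 1"
  shows "diagonal_mat (jordan_matrix L) \<and> mtr (jordan_matrix L) = sum_list (map snd L)
     \<and> sum_list (map fst L) = length L"
  using assms
proof (induction L)
  case Nil
  then show ?case by (simp add: diagonal_mat_def mtr_def jordan_matrix_def)
next
  case (Cons p L)
  obtain a0 where p: "p = (1, a0)" using Cons.prems by (cases p) auto
  let ?R = "jordan_matrix L"
  let ?N = "sum_list (map fst L)"
  have IH: "diagonal_mat ?R" "mtr ?R = sum_list (map snd L)" "?N = length L" using Cons by auto
  have dR: "dim_row ?R = ?N" "dim_col ?R = ?N" using jordan_matrix_dim[of L] by auto
  have J: "jordan_matrix (p # L) = four_block_mat (jordan_block 1 a0) (0\<^sub>m 1 ?N) (0\<^sub>m ?N 1) ?R"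
    unfolding p jordan_matrix_def by (simp add: Let_def jordan_matrix_def[symmetric])
  have "diagonal_mat (jordan_matrix (p # L))"
    unfolding diagonal_mat_def J
  proof (intro allI impI)
    fix i j assume i: "i < dim_row (four_block_mat (jordan_block 1 a0) (0\<^sub>m 1 ?N) (0\<^sub>m ?N 1) ?R)"
      and j: "j < dim_col (four_block_mat (jordan_block 1 a0) (0\<^sub>m 1 ?N) (0\<^sub>m ?N 1) ?R)" and ij: "i \<noteq> j"
    have i': "i < 1 + ?N" and j': "j < 1 + ?N" using i j dR by auto
    show "four_block_mat (jordan_block 1 a0) (0\<^sub>m 1 ?N) (0\<^sub>m ?N 1) ?R $$ (i, j) = 0"
    proof (cases "i < 1 \<or> j < 1")
      case True
      then show ?thesis using i' j' ij dR by auto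
    next
      case False
      then have "?R $$ (i - 1, j - 1) = 0" using IH(1) i' j' ij dR unfolding diagonal_mat_def by auto
      then show ?thesis using False i' j' dR by simp
    qed
  qed
  moreover have "mtr (jordan_matrix (p # L)) = sum_list (map snd (p # L))"
  proof -
    have "mtr (jordan_matrix (p # L)) = (\<Sum>i<1 + ?N. four_block_mat (jordan_block 1 a0) (0\<^sub>m 1 ?N) (0\<^sub>m ?N 1) ?R $$ (i,i))"
      unfolding mtr_def J using dR by simp
    also have "\<dots> = four_block_mat (jordan_block 1 a0) (0\<^sub>m 1 ?N) (0\<^sub>m ?N 1) ?R $$ (0,0)
        + (\<Sum>i<?N. four_block_mat (jordan_block 1 a0) (0\<^sub>m 1 ?N) (0\<^sub>m ?N 1) ?R $$ (Suc i, Suc i))"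
    proof -
      have "1 + ?N = Suc ?N" by simp
      then show ?thesis by (simp only: sum.lessThan_Suc_shift)
    qed
    also have "\<dots> = a0 + (\<Sum>i<?N. ?R $$ (i,i))" using dR by simp
    also have "\<dots> = a0 + mtr ?R" unfolding mtr_def dR ..
    finally show ?thesis using IH(2) p by simp
  qed
  ultimately show ?case using IH(3) p by simp
qed

lemma count_props:
  fixes L :: "(nat \<times> complex) list" and a1 a2 :: complex
  assumes "\<forall>p\<in>set L. snd p = a1 \<or> snd p = a2" "a1 \<noteq> a2"
  shows "length (filter (\<lambda>p. snd p = a1) L) + length (filter (\<lambda>p. snd p = a2) L) = length L"
    "sum_list (map snd L) = of_nat (length (filter (\<lambda>p. snd p = a1) L)) * a1
        + of_nat (length (filter (\<lambda>p. snd p = a2) L)) * a2"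
  using assms by (induction L) (auto simp: algebra_simps)

lemma quad_diag:
  fixes A :: "complex mat" and a1 a2 :: complex
  assumes A: "A \<in> carrier_mat n n"
    and q: "A * A + (a1 * a2) \<cdot>\<^sub>m 1\<^sub>m n = (a1 + a2) \<cdot>\<^sub>m A"
    and ne: "a1 \<noteq> a2"
  shows "diagonalizable A \<and> order a1 (char_poly A) + order a2 (char_poly A) = n
    \<and> of_nat (order a1 (char_poly A)) * a1 + of_nat (order a2 (char_poly A)) * a2 = mtr A"
proof -
  obtain as where "char_poly A = (\<Prod>a\<leftarrow>as. [:- a, 1:])" using char_poly_factorized[OF A] by blast
  then obtain L where jnf: "jordan_nf A L" using jordan_nf_exists[OF A] by blast
  let ?J = "jordan_matrix L"
  from jnf have nz: "0 \<notin> fst ` set L" and sim: "similar_mat A ?J" unfolding jordan_nf_def by auto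
  from sim obtain P Q where wit: "similar_mat_wit A ?J P Q" unfolding similar_mat_def by blast
  have dA: "dim_row A = n" using A by simp
  from wit have JC: "?J \<in> carrier_mat n n" and PC: "P \<in> carrier_mat n n" and QC: "Q \<in> carrier_mat n n"
    and PQ: "P * Q = 1\<^sub>m n" and QP: "Q * P = 1\<^sub>m n" and AJ: "A = P * ?J * Q"
    unfolding similar_mat_wit_def Let_def dA by auto
  have JQAP: "?J = Q * A * P"
  proof -
    have "Q * A * P = Q * (P * ?J * Q) * P" using AJ by simp
    also have "\<dots> = (Q * P) * ?J * (Q * P)" using PC QC JC by (simp add: assoc_mult_mat[of _ n n _ n _ n])
    also have "\<dots> = ?J" unfolding QP using left_mult_one_mat[OF JC] right_mult_one_mat[OF JC] by simp
    finally show ?thesis by simp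
  qed
  have JJ: "?J * ?J + (a1 * a2) \<cdot>\<^sub>m 1\<^sub>m n = (a1 + a2) \<cdot>\<^sub>m ?J"
  proof -
    have "?J * ?J = Q * (A * A) * P"
    proof -
      have "?J * ?J = Q * A * (P * Q) * A * P" unfolding JQAP using PC QC A
        by (simp add: assoc_mult_mat[of _ n n _ n _ n])
      also have "\<dots> = Q * (A * A) * P" using PQ PC QC A by (simp add: assoc_mult_mat[of _ n n _ n _ n])
      finally show ?thesis .
    qed
    moreover have "(a1 * a2) \<cdot>\<^sub>m 1\<^sub>m n = Q * ((a1 * a2) \<cdot>\<^sub>m 1\<^sub>m n) * P"
    proof -
      have "Q * ((a1 * a2) \<cdot>\<^sub>m 1\<^sub>m n) = (a1 * a2) \<cdot>\<^sub>m (Q * 1\<^sub>m n)"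
        by (rule mult_smult_distrib[OF QC one_carrier_mat])
      also have "Q * 1\<^sub>m n = Q" by (rule right_mult_one_mat[OF QC])
      finally have "Q * ((a1 * a2) \<cdot>\<^sub>m 1\<^sub>m n) * P = ((a1 * a2) \<cdot>\<^sub>m Q) * P" by simp
      also have "\<dots> = (a1 * a2) \<cdot>\<^sub>m (Q * P)" by (rule mult_smult_assoc_mat[OF QC PC])
      finally show ?thesis unfolding QP by simp
    qed
    moreover have "Q * (A * A + (a1 * a2) \<cdot>\<^sub>m 1\<^sub>m n) * P = Q * (A * A) * P + Q * ((a1 * a2) \<cdot>\<^sub>m 1\<^sub>m n) * P"
    proof -
      have AA: "A * A \<in> carrier_mat n n" using A by simp
      have CC: "(a1 * a2) \<cdot>\<^sub>m 1\<^sub>m n \<in> carrier_mat n n" by simp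
      have "Q * (A * A + (a1 * a2) \<cdot>\<^sub>m 1\<^sub>m n) = Q * (A * A) + Q * ((a1 * a2) \<cdot>\<^sub>m 1\<^sub>m n)"
        by (rule mult_add_distrib_mat[OF QC AA CC])
      moreover have "(Q * (A * A) + Q * ((a1 * a2) \<cdot>\<^sub>m 1\<^sub>m n)) * P = Q * (A * A) * P + Q * ((a1 * a2) \<cdot>\<^sub>m 1\<^sub>m n) * P"
        by (rule add_mult_distrib_mat) (use QC AA CC PC in auto)
      ultimately show ?thesis by simp
    qed
    ultimately have "?J * ?J + (a1 * a2) \<cdot>\<^sub>m 1\<^sub>m n = Q * (A * A + (a1 * a2) \<cdot>\<^sub>m 1\<^sub>m n) * P"
      by simp
    also have "\<dots> = Q * ((a1 + a2) \<cdot>\<^sub>m A) * P" unfolding q ..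
    also have "\<dots> = (a1 + a2) \<cdot>\<^sub>m ?J"
    proof -
      have "Q * ((a1 + a2) \<cdot>\<^sub>m A) = (a1 + a2) \<cdot>\<^sub>m (Q * A)" by (rule mult_smult_distrib[OF QC A])
      moreover have "((a1 + a2) \<cdot>\<^sub>m (Q * A)) * P = (a1 + a2) \<cdot>\<^sub>m (Q * A * P)"
        by (rule mult_smult_assoc_mat) (use QC A PC in auto)
      ultimately show ?thesis unfolding JQAP[symmetric] by simp
    qed
    finally show ?thesis .
  qed
  have dJ0: "dim_row ?J = n" using JC by auto
  have dJ: "sum_list (map fst L) = n" using dJ0 by simp
  have J2: "?J * ?J = diag_block_mat (map (\<lambda>(n,a). jordan_block n a ^\<^sub>m 2) L)"
  proof -
    have "?J ^\<^sub>m (Suc (Suc 0)) = (1\<^sub>m (dim_row ?J) * ?J) * ?J" by (simp only: pow_mat.simps)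
    also have "1\<^sub>m (dim_row ?J) * ?J = ?J" using JC by (simp add: left_mult_one_mat)
    finally have "?J ^\<^sub>m 2 = ?J * ?J" by (simp add: numeral_2_eq_2)
    then show ?thesis using jordan_matrix_pow[of L 2] by simp
  qed
  have ent: "\<forall>i<sum_list (map fst L). \<forall>j<sum_list (map fst L).
     diag_block_mat (map (\<lambda>(n,a). jordan_block n a ^\<^sub>m 2) L) $$ (i,j) + (if i = j then a1 * a2 else 0)
       = (a1 + a2) * ?J $$ (i,j)"
  proof (intro allI impI)
    fix i j assume i: "i < sum_list (map fst L)" and j: "j < sum_list (map fst L)"
    have "(?J * ?J + (a1 * a2) \<cdot>\<^sub>m 1\<^sub>m n) $$ (i,j) = ((a1 + a2) \<cdot>\<^sub>m ?J) $$ (i,j)" unfolding JJ ..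
    moreover have "(?J * ?J + (a1 * a2) \<cdot>\<^sub>m 1\<^sub>m n) $$ (i,j) = (?J * ?J) $$ (i,j) + (if i = j then a1 * a2 else 0)"
      using i j dJ JC by (simp del: index_mult_mat add: index_add_mat index_smult_mat index_one_mat)
    moreover have "((a1 + a2) \<cdot>\<^sub>m ?J) $$ (i,j) = (a1 + a2) * ?J $$ (i,j)"
      using i j dJ JC by simp
    ultimately show "diag_block_mat (map (\<lambda>(n,a). jordan_block n a ^\<^sub>m 2) L) $$ (i,j) + (if i = j then a1 * a2 else 0)
       = (a1 + a2) * ?J $$ (i,j)" unfolding J2 by simp
  qed
  have blk: "fst p = 1 \<and> (snd p = a1 \<or> snd p = a2)" if p: "p \<in> set L" for p
  proof -
    obtain k a where pa: "p = (k, a)" by force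
    have k1: "k \<ge> 1" using nz p pa by (metis fst_conv image_eqI less_one not_less)
    from blocks_quad[OF ent, of k a] p pa k1
    have h: "a * a + a1 * a2 = (a1 + a2) * a" and h2: "k \<ge> 2 \<Longrightarrow> 2 * a = a1 + a2" by auto
    have "(a - a1) * (a - a2) = 0" using h by (simp add: algebra_simps)
    then have aa: "a = a1 \<or> a = a2" by simp
    have "k = 1"
    proof (rule ccontr)
      assume "k \<noteq> 1"
      then have "2 * a = a1 + a2" using h2 k1 by simp
      then show False using aa ne by auto
    qed
    then show ?thesis using aa pa by simp
  qed
  have ones: "\<forall>p\<in>set L. fst p = 1" and vals: "\<forall>p\<in>set L. snd p = a1 \<or> snd p = a2" using blk by auto
  note op = ones_props[OF ones]
  note cp = count_props[OF vals ne]
  have ord: "order a (char_poly A) = length (filter (\<lambda>p. snd p = a) L)" for a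
  proof -
    have "map fst (filter (\<lambda>na. snd na = a) L) = replicate (length (filter (\<lambda>na. snd na = a) L)) 1"
      using ones by (induction L) auto
    then show ?thesis unfolding jordan_nf_order[OF jnf] by (simp add: sum_list_replicate)
  qed
  have "diagonalizable A" unfolding diagonalizable_def using op sim by blast
  moreover have "order a1 (char_poly A) + order a2 (char_poly A) = n"
    unfolding ord cp(1) using op dJ by simp
  moreover have "mtr A = mtr ?J"
  proof -
    have "mtr A = mtr (P * (?J * Q))" using AJ PC JC QC by (simp add: assoc_mult_mat[of _ n n _ n _ n])
    also have "\<dots> = mtr ((?J * Q) * P)" by (rule mtr_comm) (use PC JC QC in auto)
    also have "\<dots> = mtr ?J" using PC JC QC QP right_mult_one_mat[OF JC] by (simp add: assoc_mult_mat[of _ n n _ n _ n])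
    finally show ?thesis .
  qed
  moreover have "of_nat (order a1 (char_poly A)) * a1 + of_nat (order a2 (char_poly A)) * a2 = mtr ?J"
    unfolding ord using op cp(2) by simp
  ultimately show ?thesis by simp
qed


lemma prod_refl:
  fixes f :: "nat \<Rightarrow> complex"
  assumes "a \<le> K" "b \<le> K" "\<forall>e\<in>E. e \<le> K"
  shows "(\<Prod>k\<in>{K-b..K-a} - E. f k) = (\<Prod>l\<in>{a..b} - (\<lambda>k. K - k) ` E. f (K - l))"
proof (rule prod.reindex_bij_witness[of _ "\<lambda>l. K - l" "\<lambda>k. K - k"])
  fix l assume "l \<in> {a..b} - (\<lambda>k. K - k) ` E"
  then show "K - (K - l) = l" "K - l \<in> {K-b..K-a} - E" using assms by (auto simp: image_iff)
next
  fix k assume k: "k \<in> {K-b..K-a} - E"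
  then show "K - (K - k) = k" using assms by auto
  show "K - k \<in> {a..b} - (\<lambda>k. K - k) ` E"
  proof
    show "K - k \<in> {a..b}" using k assms by auto
    show "K - k \<notin> (\<lambda>k. K - k) ` E"
    proof
      assume "K - k \<in> (\<lambda>k. K - k) ` E"
      then obtain e where e: "e \<in> E" "K - k = K - e" by auto
      have "k \<le> K" using k assms by auto
      moreover have "e \<le> K" using e assms by auto
      ultimately have "k = e" using e(2) \<open>k \<le> K\<close> by linarith
      then show False using k e by auto
    qed
  qed
next
  fix k assume "k \<in> {K-b..K-a} - E"
  then have "k \<le> K" by auto
  then show "f (K - (K - k)) = f k" by simp
qed

lemma prod_refl0:
  fixes f :: "nat \<Rightarrow> complex"
  assumes "a \<le> K" "b \<le> K"
  shows "(\<Prod>k\<in>{K-b..K-a}. f k) = (\<Prod>l\<in>{a..b}. f (K - l))"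
  using prod_refl[OF assms, where E="{}" and f=f] by simp

lemma prod_refl1:
  fixes f :: "nat \<Rightarrow> complex"
  assumes "a \<le> K" "b \<le> K" "e \<le> K"
  shows "(\<Prod>k\<in>{K-b..K-a} - {K - e}. f k) = (\<Prod>l\<in>{a..b} - {e}. f (K - l))"
  using prod_refl[OF assms(1,2), where E="{K - e}" and f=f] assms(3) by simp

lemma prod_refl0':
  fixes f :: "nat \<Rightarrow> complex"
  assumes "K - b = p" "K - a = q" "a \<le> K" "b \<le> K"
  shows "(\<Prod>k\<in>{p..q}. f k) = (\<Prod>l\<in>{a..b}. f (K - l))"
  using prod_refl0[OF assms(3,4), of f] assms(1,2) by simp

lemma prod_refl1':
  fixes f :: "nat \<Rightarrow> complex"
  assumes "K - b = p" "K - a = q" "a \<le> K" "b \<le> K" "K - e = r" "e \<le> K"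
  shows "(\<Prod>k\<in>{p..q} - {r}. f k) = (\<Prod>l\<in>{a..b} - {e}. f (K - l))"
  using prod_refl1[OF assms(3,4,6), of f] assms(1,2,5) by simp

context
  fixes m :: nat and a b c :: "nat \<Rightarrow> complex"
begin

definition "xx = (\<lambda>l. c (2*m+1-l))"
definition "yy = (\<lambda>l. c (m+1-l))"
definition "sS = b 2 + b 3 - a 1 - a 2"

lemma E_R0x: assumes j: "j \<in> {1..m}"
  shows "Bent m a b c 1 (j+1) = R0 m xx yy (b 2 - a 1) sS j"
proof -
  have B: "Bent m a b c 1 (j+1) = (-1)^(m-j) * pp a b c (2*m+1-j) 2 1 * (\<Prod>k\<in>{j+1..m}. qq a b c k (2*m+1-j))
      / (\<Prod>k\<in>{m+1..2*m-j}. (c k - c (2*m+1-j)))"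
    unfolding Bent_def Let_def using j by simp
  have P1: "(\<Prod>k\<in>{j+1..m}. qq a b c k (2*m+1-j)) = (\<Prod>l\<in>{1..m-j}. (yy l + xx j + sS))"
    by (subst prod_refl0'[of "m+1" "m-j" _ 1]) (use j in \<open>auto simp: qq_def xx_def yy_def sS_def algebra_simps intro!: prod.cong\<close>)
  have P2: "(\<Prod>k\<in>{m+1..2*m-j}. (c k - c (2*m+1-j))) = DG xx m j"
    unfolding DG_def greaterThanAtMost_eq_atLeastAtMost_diff
    by (subst prod_refl0'[of "2*m+1" m _ "j+1"]) (use j in \<open>auto simp: xx_def intro!: prod.cong\<close>)
  show ?thesis unfolding B P1 P2 R0_def by (simp add: pp_def xx_def)
qed


lemma DLx: assumes i: "i \<in> {1..m}"
  shows "(\<Prod>k\<in>{2*m+2-i..2*m}. (c (2*m+1-i) - c k)) = DL xx i"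
proof -
  have e: "{1..<i} = {1..i-1}" using i by auto
  show ?thesis unfolding DL_def e
    by (subst prod_refl0'[of "2*m+1" "i-1" _ 1]) (use i in \<open>auto simp: xx_def intro!: prod.cong\<close>)
qed

lemma DLy: assumes i: "i \<in> {1..m}"
  shows "(\<Prod>k\<in>{m+2-i..m}. (c (m+1-i) - c k)) = DL yy i"
proof -
  have e: "{1..<i} = {1..i-1}" using i by auto
  show ?thesis unfolding DL_def e
    by (subst prod_refl0'[of "m+1" "i-1" _ 1]) (use i in \<open>auto simp: yy_def intro!: prod.cong\<close>)
qed

lemma DGx: assumes j: "j \<in> {1..m}"
  shows "(\<Prod>k\<in>{m+1..2*m-j}. (c k - c (2*m+1-j))) = DG xx m j"
  unfolding DG_def greaterThanAtMost_eq_atLeastAtMost_diff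
  by (subst prod_refl0'[of "2*m+1" m _ "j+1"]) (use j in \<open>auto simp: xx_def intro!: prod.cong\<close>)

lemma DGy: assumes j: "j \<in> {1..m}"
  shows "(\<Prod>k\<in>{1..m-j}. (c k - c (m+1-j))) = DG yy m j"
  unfolding DG_def greaterThanAtMost_eq_atLeastAtMost_diff
  by (subst prod_refl0'[of "m+1" m _ "j+1"]) (use j in \<open>auto simp: yy_def intro!: prod.cong\<close>)

lemma E_R0y: assumes j: "j \<in> {1..m}"
  shows "Bent m a b c 1 (m+1+j) = R0 m yy xx (b 3 - a 1) sS j"
proof -
  have B: "Bent m a b c 1 (m+1+j) = (-1)^(m-j) * pp a b c (m+1-j) 3 1 * (\<Prod>k\<in>{m+1+j..2*m}. qq a b c (m+1-j) k)
      / (\<Prod>k\<in>{1..m-j}. (c k - c (m+1-j)))"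
    unfolding Bent_def Let_def using j by simp
  have P1: "(\<Prod>k\<in>{m+1+j..2*m}. qq a b c (m+1-j) k) = (\<Prod>l\<in>{1..m-j}. (xx l + yy j + sS))"
    by (subst prod_refl0'[of "2*m+1" "m-j" _ 1]) (use j in \<open>auto simp: qq_def xx_def yy_def sS_def algebra_simps intro!: prod.cong\<close>)
  show ?thesis unfolding B P1 DGy[OF j] R0_def by (simp add: pp_def yy_def)
qed

lemma E_C0x: assumes i: "i \<in> {1..m}"
  shows "Cent m a b c (i+1) 1 = C0 m xx yy sS i"
proof -
  have B: "Cent m a b c (i+1) 1 = - (\<Prod>k\<in>{1..i}. qq a b c k (2*m+1-i)) / (\<Prod>k\<in>{2*m+2-i..2*m}. (c (2*m+1-i) - c k))"
    unfolding Cent_def Let_def using i by simp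
  have P1: "(\<Prod>k\<in>{1..i}. qq a b c k (2*m+1-i)) = (\<Prod>l\<in>{m+1-i..m}. (yy l + xx i + sS))"
    by (subst prod_refl0'[of "m+1" m _ "m+1-i"]) (use i in \<open>auto simp: qq_def xx_def yy_def sS_def algebra_simps intro!: prod.cong\<close>)
  show ?thesis unfolding B P1 DLx[OF i] C0_def ..
qed

lemma E_C0y: assumes i: "i \<in> {1..m}"
  shows "Cent m a b c (m+1+i) 1 = C0 m yy xx sS i"
proof -
  have B: "Cent m a b c (m+1+i) 1 = - (\<Prod>k\<in>{m+1..m+i}. qq a b c (m+1-i) k) / (\<Prod>k\<in>{m+2-i..m}. (c (m+1-i) - c k))"
    unfolding Cent_def Let_def using i by simp
  have P1: "(\<Prod>k\<in>{m+1..m+i}. qq a b c (m+1-i) k) = (\<Prod>l\<in>{m+1-i..m}. (xx l + yy i + sS))"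
    by (subst prod_refl0'[of "2*m+1" m _ "m+1-i"]) (use i in \<open>auto simp: qq_def xx_def yy_def sS_def algebra_simps intro!: prod.cong\<close>)
  show ?thesis unfolding B P1 DLy[OF i] C0_def ..
qed

lemma E_Mxy: assumes i: "i \<in> {1..m}" and j: "j \<in> {1..m}"
  shows "Bent m a b c (i+1) (m+1+j) = MM m xx yy (b 3 - a 1) sS i j"
proof -
  have B: "Bent m a b c (i+1) (m+1+j) = (-1)^(m-j) * pp a b c (m+1-j) 3 1
      * ((\<Prod>k\<in>{1..i} - {m+1-j}. qq a b c k (2*m+1-i)) * (\<Prod>k\<in>{m+1+j..2*m} - {2*m+1-i}. qq a b c (m+1-j) k))
      / ((\<Prod>k\<in>{2*m+2-i..2*m}. (c (2*m+1-i) - c k)) * (\<Prod>k\<in>{1..m-j}. (c k - c (m+1-j))))"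
    unfolding Bent_def Let_def using i j by simp
  have P1: "(\<Prod>k\<in>{1..i} - {m+1-j}. qq a b c k (2*m+1-i)) = (\<Prod>l\<in>{m+1-i..m} - {j}. (yy l + xx i + sS))"
    by (subst prod_refl1'[of "m+1" m _ "m+1-i" _ j]) (use i j in \<open>auto simp: qq_def xx_def yy_def sS_def algebra_simps intro!: prod.cong\<close>)
  have P2: "(\<Prod>k\<in>{m+1+j..2*m} - {2*m+1-i}. qq a b c (m+1-j) k) = (\<Prod>l\<in>{1..m-j} - {i}. (xx l + yy j + sS))"
    by (subst prod_refl1'[of "2*m+1" "m-j" _ 1 _ i]) (use i j in \<open>auto simp: qq_def xx_def yy_def sS_def algebra_simps intro!: prod.cong\<close>)
  show ?thesis unfolding B P1 P2 DLx[OF i] DGy[OF j] MM_def by (simp add: pp_def yy_def)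
qed

lemma E_Myx: assumes i: "i \<in> {1..m}" and j: "j \<in> {1..m}"
  shows "Cent m a b c (m+1+i) (j+1) = MM m yy xx (b 2 - a 1) sS i j"
proof -
  have B: "Cent m a b c (m+1+i) (j+1) = (-1)^(m-j) * pp a b c (2*m+1-j) 2 1
      * ((\<Prod>k\<in>{m+1..m+i} - {2*m+1-j}. qq a b c (m+1-i) k) * (\<Prod>k\<in>{j+1..m} - {m+1-i}. qq a b c k (2*m+1-j)))
      / ((\<Prod>k\<in>{m+2-i..m}. (c (m+1-i) - c k)) * (\<Prod>k\<in>{m+1..2*m-j}. (c k - c (2*m+1-j))))"
    unfolding Cent_def Let_def using i j by simp
  have P1: "(\<Prod>k\<in>{m+1..m+i} - {2*m+1-j}. qq a b c (m+1-i) k) = (\<Prod>l\<in>{m+1-i..m} - {j}. (xx l + yy i + sS))"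
    by (subst prod_refl1'[of "2*m+1" m _ "m+1-i" _ j]) (use i j in \<open>auto simp: qq_def xx_def yy_def sS_def algebra_simps intro!: prod.cong\<close>)
  have P2: "(\<Prod>k\<in>{j+1..m} - {m+1-i}. qq a b c k (2*m+1-j)) = (\<Prod>l\<in>{1..m-j} - {i}. (yy l + xx j + sS))"
    by (subst prod_refl1'[of "m+1" "m-j" _ 1 _ i]) (use i j in \<open>auto simp: qq_def xx_def yy_def sS_def algebra_simps intro!: prod.cong\<close>)
  show ?thesis unfolding B P1 P2 DLy[OF i] DGx[OF j] MM_def by (simp add: pp_def xx_def)
qed

end


lemma sum_refl0':
  fixes f :: "nat \<Rightarrow> complex"
  assumes "K - b = p" "K - a = q" "a \<le> K" "b \<le> K"
  shows "(\<Sum>k\<in>{p..q}. f k) = (\<Sum>l\<in>{a..b}. f (K - l))"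
proof (rule sum.reindex_bij_witness[of _ "\<lambda>l. K - l" "\<lambda>k. K - k"])
  fix l assume "l \<in> {a..b}"
  then show "K - (K - l) = l" "K - l \<in> {p..q}" using assms by auto
next
  fix k assume "k \<in> {p..q}"
  then show "K - (K - k) = k" "K - k \<in> {a..b}" "f (K - (K - k)) = f k" using assms by auto
qed

context
  fixes m :: nat and a b c :: "nat \<Rightarrow> complex"
  assumes m2: "m \<ge> 2"
begin

lemma BC_entry:
  assumes r: "r < 2*m+1" and q: "q < 2*m+1"
  shows "Bent m a b c (r+1) (q+1) + Cent m a b c (r+1) (q+1)
    = Gent m (xx m c) (yy m c) (b 2 - a 1) (b 3 - a 1) (a 1) (sS a b) (b 1 + c (2*m+1)) r q"
proof -
  consider (Z) "r = 0" | (X) "r \<in> {1..m}" | (Y) "r - m \<in> {1..m}" "r = m + (r - m)" using r by (cases "r = 0"; cases "r \<le> m") auto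
  note rc = this
  consider (Z) "q = 0" | (X) "q \<in> {1..m}" | (Y) "q - m \<in> {1..m}" "q = m + (q - m)" using q by (cases "q = 0"; cases "q \<le> m") auto
  note qc = this
  show ?thesis
  proof (cases rule: rc)
    case Z
    show ?thesis
    proof (cases rule: qc)
      case Z
      then show ?thesis using \<open>r = 0\<close> unfolding Bent_def Cent_def Gent_def by simp
    next
      case X
      have "Cent m a b c 1 (q+1) = 0" unfolding Cent_def using X by simp
      then show ?thesis using \<open>r = 0\<close> E_R0x[OF X, of a b c] GS(2)[OF X] by simp
    next
      case Y
      define j where "j = q - m"
      have qj: "q + 1 = m + 1 + j" using Y unfolding j_def by simp
      have "Cent m a b c 1 (m+1+j) = 0" unfolding Cent_def using Y j_def by simp
      then show ?thesis using \<open>r = 0\<close> E_R0y[OF Y(1)[folded j_def], of a b c] GS(3)[OF Y(1)[folded j_def]] qj Y(2) j_def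
        by simp
    qed
  next
    case X
    show ?thesis
    proof (cases rule: qc)
      case Z
      have "Bent m a b c (r+1) 1 = 0" unfolding Bent_def using X by simp
      then show ?thesis using \<open>q = 0\<close> E_C0x[OF X, of a b c] GS(4)[OF X] by simp
    next
      case X2: X
      have "Bent m a b c (r+1) (q+1) = (if r = q then b 2 else 0)" unfolding Bent_def using X X2 by auto
      moreover have "Cent m a b c (r+1) (q+1) = (if r = q then c (2*m+1-r) else 0)" unfolding Cent_def using X X2 by auto
      ultimately show ?thesis using GS(6)[OF X X2] by (simp add: xx_def)
    next
      case Y
      define j where "j = q - m"
      have qj: "q + 1 = m + 1 + j" using Y unfolding j_def by simp
      have "Cent m a b c (r+1) (m+1+j) = 0" unfolding Cent_def using X Y j_def by simp
      then show ?thesis using E_Mxy[OF X Y(1)[folded j_def], of a b c] GS(7)[OF X Y(1)[folded j_def]] qj Y(2) j_def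
        by simp
    qed
  next
    case Y
    define i where "i = r - m"
    have ri: "r + 1 = m + 1 + i" using Y unfolding i_def by simp
    have i: "i \<in> {1..m}" using Y i_def by simp
    show ?thesis
    proof (cases rule: qc)
      case Z
      have "Bent m a b c (m+1+i) 1 = 0" unfolding Bent_def using i by simp
      then show ?thesis using \<open>q = 0\<close> E_C0y[OF i, of a b c] GS(5)[OF i] ri Y(2) i_def by simp
    next
      case X
      have "Bent m a b c (m+1+i) (q+1) = 0" unfolding Bent_def using i X by simp
      then show ?thesis using E_Myx[OF i X, of a b] GS(8)[OF i X] ri Y(2) i_def by simp
    next
      case Y2: Y
      define k where "k = q - m"
      have qk: "q + 1 = m + 1 + k" using Y2 unfolding k_def by simp
      have k: "k \<in> {1..m}" using Y2 k_def by simp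
      have "Bent m a b c (m+1+i) (m+1+k) = (if i = k then b 3 else 0)" unfolding Bent_def using i k by auto
      moreover have "Cent m a b c (m+1+i) (m+1+k) = (if i = k then c (m+1-i) else 0)" unfolding Cent_def using i k by auto
      ultimately show ?thesis using GS(9)[OF i k] ri qk Y(2) Y2(2) i_def k_def by (simp add: yy_def)
    qed
  qed
qed

end

theorem theorem2p16:
  fixes m :: nat and a b c :: "nat \<Rightarrow> complex"
  assumes "m \<ge> 2"
    and "a 1 \<noteq> a 2"
    and "b 1 \<noteq> b 2" and "b 1 \<noteq> b 3" and "b 2 \<noteq> b 3"
    and "inj_on c {1..2*m+1}"
    and "of_nat (m + 1) * a 1 + of_nat m * a 2
           = b 1 + of_nat m * b 2 + of_nat m * b 3 + (\<Sum>i = 1..2*m+1. c i)"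
  shows "diagonalizable (Bmat m a b c + Cmat m a b c)
         \<and> order (a 1) (char_poly (Bmat m a b c + Cmat m a b c)) = m + 1
         \<and> order (a 2) (char_poly (Bmat m a b c + Cmat m a b c)) = m"
proof -
  note m2 = assms(1) and ne = assms(2) and injc = assms(6) and hyp = assms(7)
  define N where "N = 2*m+1"
  define x where "x = xx m c"
  define y where "y = yy m c"
  define be where "be = b 2 - a 1"
  define ga where "ga = b 3 - a 1"
  define s where "s = sS a b"
  define d where "d = b 1 + c (2*m+1)"
  define A where "A = Bmat m a b c + Cmat m a b c"
  have sdef: "s = be + ga + a 1 - a 2" unfolding s_def sS_def be_def ga_def by simp
  have ix: "inj_on x {1..m}"
  proof (rule inj_onI)
    fix i j assume i: "i \<in> {1..m}" and j: "j \<in> {1..m}" and e: "x i = x j"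
    have "c (2*m+1-i) = c (2*m+1-j)" using e unfolding x_def xx_def by simp
    then have "2*m+1-i = 2*m+1-j" by (rule inj_onD[OF injc]) (use i j in auto)
    then show "i = j" using i j by auto
  qed
  have iy: "inj_on y {1..m}"
  proof (rule inj_onI)
    fix i j assume i: "i \<in> {1..m}" and j: "j \<in> {1..m}" and e: "y i = y j"
    have "c (m+1-i) = c (m+1-j)" using e unfolding y_def yy_def by simp
    then have "m+1-i = m+1-j" by (rule inj_onD[OF injc]) (use i j in auto)
    then show "i = j" using i j by auto
  qed
  have sumc: "(\<Sum>i = 1..2*m+1. c i) = c (2*m+1) + (\<Sum>l=1..m. x l) + (\<Sum>l=1..m. y l)"
  proof -
    have s1: "{1..2*m+1} = insert (2*m+1) ({1..m} \<union> {m+1..2*m})" by auto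
    have "(\<Sum>i = 1..2*m+1. c i) = c (2*m+1) + ((\<Sum>i = 1..m. c i) + (\<Sum>i = m+1..2*m. c i))"
      unfolding s1 by (subst sum.insert) (auto simp: sum.union_disjoint)
    moreover have "(\<Sum>i = 1..m. c i) = (\<Sum>l=1..m. y l)"
      unfolding y_def yy_def by (rule sum_refl0'[of "m+1" m _ 1]) auto
    moreover have "(\<Sum>i = m+1..2*m. c i) = (\<Sum>l=1..m. x l)"
      unfolding x_def xx_def by (rule sum_refl0'[of "2*m+1" m _ 1]) auto
    ultimately show ?thesis by simp
  qed
  have ddef: "d = a 2 - be - ga - (\<Sum>l=1..m. x l) - (\<Sum>l=1..m. y l) - (of_nat m - 1) * s"
    using hyp unfolding sumc d_def be_def ga_def s_def sS_def by (simp add: algebra_simps)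
  let ?G = "Gent m x y be ga (a 1) s d"
  have AG: "A = mat N N (\<lambda>(r, q). ?G r q)"
  proof (rule eq_matI)
    fix r q assume r: "r < dim_row (mat N N (\<lambda>(r, q). ?G r q))" and q: "q < dim_col (mat N N (\<lambda>(r, q). ?G r q))"
    then have r': "r < 2*m+1" and q': "q < 2*m+1" unfolding N_def by auto
    have "A $$ (r, q) = Bent m a b c (r+1) (q+1) + Cent m a b c (r+1) (q+1)"
      unfolding A_def Bmat_def Cmat_def using r' q' by simp
    also have "\<dots> = ?G r q" unfolding x_def y_def be_def ga_def s_def d_def by (rule BC_entry[OF m2 r' q'])
    finally show "A $$ (r, q) = mat N N (\<lambda>(r, q). ?G r q) $$ (r, q)" using r' q' unfolding N_def by simp
  qed (auto simp: A_def Bmat_def Cmat_def N_def)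
  have AC: "A \<in> carrier_mat N N" unfolding AG by simp
  have quad: "A * A + (a 1 * a 2) \<cdot>\<^sub>m 1\<^sub>m N = (a 1 + a 2) \<cdot>\<^sub>m A"
  proof (rule eq_matI)
    fix r q assume r: "r < dim_row ((a 1 + a 2) \<cdot>\<^sub>m A)" and q: "q < dim_col ((a 1 + a 2) \<cdot>\<^sub>m A)"
    then have r': "r < N" and q': "q < N" using AC by auto
    have mm: "(A * A) $$ (r, q) = (\<Sum>t<2*m+1. ?G r t * ?G t q)"
    proof -
      have "(A * A) $$ (r, q) = row A r \<bullet> col A q" using r' q' AC by simp
      also have "\<dots> = (\<Sum>t\<in>{0..<N}. row A r $ t * col A q $ t)" unfolding scalar_prod_def using AC by simp
      also have "\<dots> = (\<Sum>t\<in>{0..<N}. ?G r t * ?G t q)"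
        by (intro sum.cong refl) (use r' q' AC in \<open>simp add: AG\<close>)
      finally show ?thesis unfolding N_def lessThan_atLeast0 .
    qed
    have key: "(\<Sum>t<2*m+1. ?G r t * ?G t q) - (a 1 + a 2) * ?G r q + (if r = q then a 1 * a 2 else 0) = 0"
    proof -
      consider (Z) "r = 0" | (X) "r \<in> {1..m}" | (Y) "r - m \<in> {1..m}" "r = m + (r - m)"
        using r' N_def by (cases "r = 0"; cases "r \<le> m") auto
      note rc = this
      consider (Z) "q = 0" | (X) "q \<in> {1..m}" | (Y) "q - m \<in> {1..m}" "q = m + (q - m)"
        using q' N_def by (cases "q = 0"; cases "q \<le> m") auto
      note qc = this
      note H = ix iy m2 sdef ddef
      show ?thesis
      proof (cases rule: rc)
        case Z
        then show ?thesis
        proof (cases rule: qc)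
          case Z
          then show ?thesis using c00[OF H] \<open>r = 0\<close> by simp
        next
          case X
          then show ?thesis using c0X[OF H X] \<open>r = 0\<close> by simp
        next
          case Y
          then show ?thesis using c0Y[OF H Y(1)] \<open>r = 0\<close> by simp
        qed
      next
        case X
        then show ?thesis
        proof (cases rule: qc)
          case Z
          then show ?thesis using cX0[OF H X] X by simp
        next
          case X2: X
          then show ?thesis using cXX[OF H X X2] by simp
        next
          case Y
          then show ?thesis using cXY[OF H X Y(1)] X by simp
        qed
      next
        case Y
        then show ?thesis
        proof (cases rule: qc)
          case Z
          then show ?thesis using cY0[OF H Y(1)] Y by simp
        next
          case X
          then show ?thesis using cYX[OF H Y(1) X] Y X by simp
        next
          case Y2: Y
          have "(r = q) = (r - m = q - m)" using Y Y2 by linarith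
          then show ?thesis using cYY[OF H Y(1) Y2(1)] Y Y2 by simp
        qed
      qed
    qed
    have "(A * A + (a 1 * a 2) \<cdot>\<^sub>m 1\<^sub>m N) $$ (r, q) = (A * A) $$ (r, q) + (if r = q then a 1 * a 2 else 0)"
      using r' q' AC by (simp del: index_mult_mat)
    also have "\<dots> = (a 1 + a 2) * ?G r q" using key mm by (simp add: algebra_simps)
    also have "\<dots> = ((a 1 + a 2) \<cdot>\<^sub>m A) $$ (r, q)" using r' q' unfolding AG by simp
    finally show "(A * A + (a 1 * a 2) \<cdot>\<^sub>m 1\<^sub>m N) $$ (r, q) = ((a 1 + a 2) \<cdot>\<^sub>m A) $$ (r, q)" .
  qed (use AC in auto)
  note QD = quad_diag[OF AC quad ne]
  define k1 where "k1 = order (a 1) (char_poly A)"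
  define k2 where "k2 = order (a 2) (char_poly A)"
  have kk: "k1 + k2 = N" and tr: "of_nat k1 * a 1 + of_nat k2 * a 2 = mtr A"
    using QD unfolding k1_def k2_def by auto
  have mtrA: "mtr A = of_nat (m + 1) * a 1 + of_nat m * a 2"
  proof -
    have "mtr A = (\<Sum>t<2*m+1. ?G t t)" unfolding mtr_def AG N_def by simp
    also have "\<dots> = d + (\<Sum>t=1..m. (x t + be + a 1)) + (\<Sum>t=1..m. (y t + ga + a 1))"
    proof -
      have e1: "(\<Sum>t=1..m. ?G t t) = (\<Sum>t=1..m. (x t + be + a 1))"
        by (intro sum.cong refl) (simp add: GS)
      have e2: "(\<Sum>t=1..m. ?G (m + t) (m + t)) = (\<Sum>t=1..m. (y t + ga + a 1))"
        by (intro sum.cong refl) (simp add: GS)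
      show ?thesis unfolding sum_split3 e1 e2 GS(1) ..
    qed
    also have "\<dots> = of_nat (m + 1) * a 1 + of_nat m * a 2"
      unfolding ddef sdef by (simp add: sum.distrib algebra_simps)
    finally show ?thesis .
  qed
  have "of_nat k1 * a 1 + (of_nat N - of_nat k1) * a 2 = of_nat (m + 1) * a 1 + of_nat m * a 2"
    using tr mtrA kk by (metis add_diff_cancel_left' of_nat_add)
  then have "(of_nat k1 - of_nat (m + 1)) * (a 1 - a 2) = (0::complex)"
    unfolding N_def by (simp add: algebra_simps)
  then have "(of_nat k1 :: complex) = of_nat (m + 1)" using ne by simp
  then have k1v: "k1 = m + 1" by (simp only: of_nat_eq_iff)
  then have k2v: "k2 = m" using kk N_def by simp
  show ?thesis using QD k1v k2v unfolding k1_def k2_def A_def by simp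
qed


end
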